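(* Let $(p_{ij})_{i,j\in\{0,1\}}$ be a transition matrix with all $p_{ij}\in(0,1)$ and $p_{ij}\ne\tfrac12$ for some $(i,j)$; for $i\in\{0,1\}$ let $I_n^i\sim B(n,p_{i0})$. Let $(X_n^i,Z_n^i)_{n\in\mathbb N_0}$, $i\in\{0,1\}$, be random variables with finite second moments such that $X_n^i=Z_n^i=0$ for $n\le1$ and, for all $n\ge2$ and $i\in\{0,1\}$, $$\begin{pmatrix}X_n^i\\ Z_n^i\end{pmatrix}\stackrel{d}{=}\begin{pmatrix}X^0_{I_n^i}\\ Z^0_{I_n^i}\end{pmatrix}+\begin{pmatrix}X^1_{n-I_n^i}\\ Z^1_{n-I_n^i}\end{pmatrix}+\begin{pmatrix}\eta_n^{i,1}\\ \eta_n^{i,2}\end{pmatrix},$$ with $(X^0_k,Z^0_k)_{k\le n}$, $(X^1_k,Z^1_k)_{k\le n}$, $I_n^i$ independent on the right, and $$\eta_n^{i,1}=\frac1H\Big(n\log n-\mathbb E\big[I_n^i\log I_n^i+(n-I_n^i)\log(n-I_n^i)\big]\Big)+\pi_{1-i}\frac{H_{1-i}-H_i}{H}n+\frac{H_1-H_0}{(p_{01}+p_{10})H}p_{i0}p_{i1}^{n-1}n,\quad \eta_n^{i,2}=n-\eta_n^{i,1}.$$ Then for both $i\in\{0,1\}$, as $n\to\infty$, $\operatorname{Var}(X_n^i)=\sigma^2n\log n+O(n)$, where $$\sigma^2=\frac{\pi_0 p_{00}p_{01}}{H^3}\Big(\log(p_{00}/p_{01})+\frac{H_1-H_0}{p_{01}+p_{10}}\Big)^2+\frac{\pi_1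 p_{10}p_{11}}{H^3}\Big(\log(p_{10}/p_{11})+\frac{H_1-H_0}{p_{01}+p_{10}}\Big)^2.$$
   Context: $0\log0:=0$. $\pi_0=p_{10}/(p_{01}+p_{10})$, $\pi_1=p_{01}/(p_{01}+p_{10})$, $H_i=-\sum_jp_{ij}\log p_{ij}$, $H=\pi_0H_0+\pi_1H_1$. *)

theory Defs
  imports "HOL-Probability.Probability" "HOL-Library.Landau_Symbols"
begin

definition xlogx :: "real \<Rightarrow> real" where
  "xlogx x = (if x = 0 then 0 else x * ln x)"

definition stat_pi :: "(nat \<Rightarrow> nat \<Rightarrow> real) \<Rightarrow> nat \<Rightarrow> real" where
  "stat_pi p i = (if i = 0 then p 1 0 / (p 0 1 + p 1 0) else p 0 1 / (p 0 1 + p 1 0))"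

definition row_entropy :: "(nat \<Rightarrow> nat \<Rightarrow> real) \<Rightarrow> nat \<Rightarrow> real" where
  "row_entropy p i = - (\<Sum>j\<in>{0,1}. xlogx (p i j))"

definition entropy_H :: "(nat \<Rightarrow> nat \<Rightarrow> real) \<Rightarrow> real" where
  "entropy_H p = stat_pi p 0 * row_entropy p 0 + stat_pi p 1 * row_entropy p 1"

definition eta1 :: "(nat \<Rightarrow> nat \<Rightarrow> real) \<Rightarrow> nat \<Rightarrow> nat \<Rightarrow> real" where
  "eta1 p i n =
     (1 / entropy_H p) * (xlogx (real n)
        - measure_pmf.expectation (binomial_pmf n (p i 0))
            (\<lambda>k. xlogx (real k) + xlogx (real n - real k)))
     + stat_pi p (1 - i) * (row_entropy p (1 - i) - row_entropy p i) / entropy_H p * real n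
     + (row_entropy p 1 - row_entropy p 0) / ((p 0 1 + p 1 0) * entropy_H p)
         * p i 0 * p i 1 ^ (n - 1) * real n"

definition eta2 :: "(nat \<Rightarrow> nat \<Rightarrow> real) \<Rightarrow> nat \<Rightarrow> nat \<Rightarrow> real" where
  "eta2 p i n = real n - eta1 p i n"

definition sigma2 :: "(nat \<Rightarrow> nat \<Rightarrow> real) \<Rightarrow> real" where
  "sigma2 p =
     stat_pi p 0 * p 0 0 * p 0 1 / entropy_H p ^ 3
       * (ln (p 0 0 / p 0 1) + (row_entropy p 1 - row_entropy p 0) / (p 0 1 + p 1 0)) ^ 2
   + stat_pi p 1 * p 1 0 * p 1 1 / entropy_H p ^ 3
       * (ln (p 1 0 / p 1 1) + (row_entropy p 1 - row_entropy p 0) / (p 0 1 + p 1 0)) ^ 2"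

definition pair_law :: "'a measure \<Rightarrow> (nat \<Rightarrow> nat \<Rightarrow> 'a \<Rightarrow> real) \<Rightarrow> (nat \<Rightarrow> nat \<Rightarrow> 'a \<Rightarrow> real)
     \<Rightarrow> nat \<Rightarrow> nat \<Rightarrow> (real \<times> real) measure" where
  "pair_law M X Z i n = distr M borel (\<lambda>\<omega>. (X i n \<omega>, Z i n \<omega>))"

text \<open>Law of the right-hand side of the recursion: I ~ B(n, p i 0), independent of
  independent copies of (X^0_k,Z^0_k) and (X^1_k,Z^1_k); mixture over the value k of I.\<close>
definition rhs_law :: "(nat \<Rightarrow> nat \<Rightarrow> real) \<Rightarrow> 'a measure \<Rightarrow> (nat \<Rightarrow> nat \<Rightarrow> 'a \<Rightarrow> real)
     \<Rightarrow> (nat \<Rightarrow> nat \<Rightarrow> 'a \<Rightarrow> real) \<Rightarrow> nat \<Rightarrow> nat \<Rightarrow> (real \<times> real) set \<Rightarrow> real" where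
  "rhs_law p M X Z i n A =
     (\<Sum>k\<le>n. pmf (binomial_pmf n (p i 0)) k *
        measure (distr (pair_law M X Z 0 k \<Otimes>\<^sub>M pair_law M X Z 1 (n - k)) borel
                   (\<lambda>((a, b), (c, d)). (a + c + eta1 p i n, b + d + eta2 p i n))) A)"

end

theory Submission
  imports Defs
begin

definition bw :: "nat \<Rightarrow> real \<Rightarrow> nat \<Rightarrow> real" where
  "bw n q k = real (n choose k) * q ^ k * (1 - q) ^ (n - k)"

lemma bw_nonneg: "0 \<le> q \<Longrightarrow> q \<le> 1 \<Longrightarrow> 0 \<le> bw n q k"
  by (simp add: bw_def)

lemma bw_sum: "(\<Sum>k\<le>n. bw n q k) = 1"
proof -
  have "(q + (1 - q)) ^ n = (\<Sum>k\<le>n. real (n choose k) * q ^ k * (1 - q) ^ (n - k))"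
    by (rule binomial_ring)
  then show ?thesis by (simp add: bw_def)
qed

lemma bw_shift:
  "(\<Sum>k\<le>Suc m. bw (Suc m) q k * real k * g (k - 1)) = real (Suc m) * q * (\<Sum>j\<le>m. bw m q j * g j)"
proof -
  have "(\<Sum>k\<le>Suc m. bw (Suc m) q k * real k * g (k - 1))
      = (\<Sum>j\<le>m. bw (Suc m) q (Suc j) * real (Suc j) * g j)"
    by (subst sum.atMost_Suc_shift) simp
  also have "\<dots> = (\<Sum>j\<le>m. real (Suc m) * q * (bw m q j * g j))"
  proof (rule sum.cong)
    fix j assume "j \<in> {..m}"
    have e: "real (Suc m choose Suc j) * real (Suc j) = real (Suc m) * real (m choose j)"
      using Suc_times_binomial_eq[of m j] by (metis of_nat_mult)
    have "bw (Suc m) q (Suc j) * real (Suc j) = (real (Suc m choose Suc j) * real (Suc j)) * q * q ^ j * (1 - q) ^ (m - j)"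
      by (simp add: bw_def)
    also have "\<dots> = real (Suc m) * q * bw m q j" by (simp only: e) (simp add: bw_def)
    finally show "bw (Suc m) q (Suc j) * real (Suc j) * g j = real (Suc m) * q * (bw m q j * g j)"
      by simp
  qed simp
  also have "\<dots> = real (Suc m) * q * (\<Sum>j\<le>m. bw m q j * g j)"
    by (simp add: sum_distrib_left)
  finally show ?thesis .
qed

fun ff :: "real \<Rightarrow> nat \<Rightarrow> real" where
  "ff x 0 = 1"
| "ff x (Suc j) = x * ff (x - 1) j"

lemma bw_ff: "(\<Sum>k\<le>n. bw n q k * ff (real k) j) = ff (real n) j * q ^ j"
proof (induction j arbitrary: n)
  case 0
  then show ?case by (simp add: bw_sum)
next
  case (Suc j)
  show ?case
  proof (cases n)
    case 0
    then show ?thesis by (simp add: bw_def)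
  next
    case (Suc m)
    have "(\<Sum>k\<le>n. bw n q k * ff (real k) (Suc j)) = (\<Sum>k\<le>Suc m. bw (Suc m) q k * real k * ff (real (k - 1)) j)"
      unfolding Suc
    proof (rule sum.cong)
      fix k assume "k \<in> {..Suc m}"
      show "bw (Suc m) q k * ff (real k) (Suc j) = bw (Suc m) q k * real k * ff (real (k - 1)) j"
        by (cases k) auto
    qed simp
    also have "\<dots> = real (Suc m) * q * (ff (real m) j * q ^ j)"
      by (subst bw_shift[where g="\<lambda>k. ff (real k) j"]) (simp add: Suc.IH)
    also have "\<dots> = ff (real n) (Suc j) * q ^ Suc j" using Suc by simp
    finally show ?thesis .
  qed
qed

lemma ff1: "ff x 1 = x" by simp
lemma ff2: "ff x 2 = x * (x - 1)" by (simp add: numeral_eq_Suc)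
lemma ff3: "ff x 3 = x * (x - 1) * (x - 2)" by (simp add: numeral_eq_Suc algebra_simps)
lemma ff4: "ff x 4 = x * (x - 1) * (x - 2) * (x - 3)" by (simp add: numeral_eq_Suc algebra_simps)

lemma bw_lin: "(\<Sum>k\<le>n. bw n q k * (c0 * ff (real k) 0 + c1 * ff (real k) 1 + c2 * ff (real k) 2 + c3 * ff (real k) 3 + c4 * ff (real k) 4))
  = c0 + c1 * ff (real n) 1 * q + c2 * ff (real n) 2 * q^2 + c3 * ff (real n) 3 * q^3 + c4 * ff (real n) 4 * q^4"
proof -
  have "(\<Sum>k\<le>n. bw n q k * (c0 * ff (real k) 0 + c1 * ff (real k) 1 + c2 * ff (real k) 2 + c3 * ff (real k) 3 + c4 * ff (real k) 4))
    = c0 * (\<Sum>k\<le>n. bw n q k * ff (real k) 0) + c1 * (\<Sum>k\<le>n. bw n q k * ff (real k) 1) + c2 * (\<Sum>k\<le>n. bw n q k * ff (real k) 2)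
      + c3 * (\<Sum>k\<le>n. bw n q k * ff (real k) 3) + c4 * (\<Sum>k\<le>n. bw n q k * ff (real k) 4)"
    by (simp add: sum.distrib sum_distrib_left algebra_simps)
  also have "\<dots> = c0 + c1 * ff (real n) 1 * q + c2 * ff (real n) 2 * q^2 + c3 * ff (real n) 3 * q^3 + c4 * ff (real n) 4 * q^4"
    by (simp only: bw_ff) simp
  finally show ?thesis .
qed

lemma bw_mean: "(\<Sum>k\<le>n. bw n q k * real k) = real n * q"
  using bw_ff[of n q 1] by simp

lemma bw_sq: "(\<Sum>k\<le>n. bw n q k * (real k)^2) = real n * (real n - 1) * q^2 + real n * q"
proof -
  have "(\<Sum>k\<le>n. bw n q k * (real k)^2) = (\<Sum>k\<le>n. bw n q k * (0 * ff (real k) 0 + 1 * ff (real k) 1 + 1 * ff (real k) 2 + 0 * ff (real k) 3 + 0 * ff (real k) 4))"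
    by (rule sum.cong) (simp_all add: ff2 power2_eq_square algebra_simps)
  also have "\<dots> = real n * (real n - 1) * q^2 + real n * q" by (subst bw_lin) (simp add: ff2 power2_eq_square)
  finally show ?thesis .
qed

lemma bw_var: "(\<Sum>k\<le>n. bw n q k * (real k - real n * q)^2) = real n * q * (1 - q)"
proof -
  define a where "a = real n * q"
  have "(\<Sum>k\<le>n. bw n q k * (real k - a)^2) = (\<Sum>k\<le>n. bw n q k * (a^2 * ff (real k) 0 + (1 - 2*a) * ff (real k) 1 + 1 * ff (real k) 2 + 0 * ff (real k) 3 + 0 * ff (real k) 4))"
    by (rule sum.cong[OF refl]) (simp add: ff2 power2_eq_square algebra_simps)
  also have "\<dots> = a^2 + (1 - 2*a) * ff (real n) 1 * q + 1 * ff (real n) 2 * q^2 + 0 * ff (real n) 3 * q^3 + 0 * ff (real n) 4 * q^4"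
    by (subst bw_lin) simp
  also have "\<dots> = real n * q * (1 - q)"
    unfolding a_def ff1 ff2 by algebra
  finally show ?thesis unfolding a_def .
qed

lemma bw_m4: "(\<Sum>k\<le>n. bw n q k * (real k - real n * q)^4) = real n * q * (1 - q) * (1 + 3 * (real n - 2) * q * (1 - q))"
proof -
  define a where "a = real n * q"
  have "(\<Sum>k\<le>n. bw n q k * (real k - a)^4) = (\<Sum>k\<le>n. bw n q k * (a^4 * ff (real k) 0 + (1 - 4*a + 6*a^2 - 4*a^3) * ff (real k) 1 + (7 - 12*a + 6*a^2) * ff (real k) 2 + (6 - 4*a) * ff (real k) 3 + 1 * ff (real k) 4))"
    by (rule sum.cong[OF refl]) (simp add: ff2 ff3 ff4 power2_eq_square power3_eq_cube power4_eq_xxxx algebra_simps)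
  also have "\<dots> = a^4 + (1 - 4*a + 6*a^2 - 4*a^3) * ff (real n) 1 * q + (7 - 12*a + 6*a^2) * ff (real n) 2 * q^2 + (6 - 4*a) * ff (real n) 3 * q^3 + 1 * ff (real n) 4 * q^4"
    by (subst bw_lin) simp
  also have "\<dots> = real n * q * (1 - q) * (1 + 3 * (real n - 2) * q * (1 - q))"
    unfolding a_def ff1 ff2 ff3 ff4 by algebra
  finally show ?thesis unfolding a_def .
qed

lemma bw_m4_bound: assumes "0 \<le> q" "q \<le> 1"
  shows "(\<Sum>k\<le>n. bw n q k * (real k - real n * q)^4) \<le> 3 * (real n)^2 + real n"
proof -
  define u where "u = q * (1 - q)"
  have u0: "0 \<le> u" using assms unfolding u_def by simp
  have "0 \<le> (q - 1/2)^2" by simp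
  then have u1: "u \<le> 1/4" unfolding u_def by (simp add: power2_eq_square algebra_simps)
  have "real n * q * (1 - q) * (1 + 3 * (real n - 2) * q * (1 - q)) = 3 * (real n)^2 * u^2 + real n * u - 6 * real n * u^2"
    unfolding u_def by (simp add: power2_eq_square algebra_simps)
  also have "\<dots> \<le> 3 * (real n)^2 + real n"
  proof -
    have "u^2 \<le> 1" using u0 u1 by (simp add: power2_eq_square mult_le_one)
    then have "3 * (real n)^2 * u^2 \<le> 3 * (real n)^2" by (simp add: mult_left_le)
    moreover have "real n * u \<le> real n" using u1 by (simp add: mult_left_le)
    moreover have "0 \<le> 6 * real n * u^2" using u0 by simp
    ultimately show ?thesis by linarith
  qed
  finally show ?thesis by (simp add: bw_m4)
qed


lemma xlogx_pos: "0 < x \<Longrightarrow> xlogx x = x * ln x" by (simp add: xlogx_def)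
lemma xlogx_0[simp]: "xlogx 0 = 0" by (simp add: xlogx_def)

definition Rr :: "real \<Rightarrow> real \<Rightarrow> real" where
  "Rr a x = xlogx x - xlogx a - (1 + ln a) * (x - a)"

lemma Rr_bounds:
  assumes a: "0 < a" and x: "0 \<le> x"
  shows "0 \<le> Rr a x" "Rr a x \<le> (x - a)^2 / a"
proof -
  have "0 \<le> Rr a x \<and> Rr a x \<le> (x - a)^2 / a"
  proof (cases "x = 0")
    case True
    then have "Rr a x = a" using a by (simp add: Rr_def xlogx_def algebra_simps)
    moreover have "(x - a)^2 / a = a" using True a by (simp add: power2_eq_square)
    ultimately show ?thesis using a by simp
  next
    case False
    then have xp: "0 < x" using x by simp
    have e: "Rr a x = x * ln (x / a) - x + a"
      using xp a by (simp add: Rr_def xlogx_def ln_div algebra_simps)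
    have l1: "ln (a / x) \<le> a / x - 1" using xp a by (intro ln_le_minus_one) simp
    have "ln (x / a) = - ln (a / x)" using xp a by (simp add: ln_div)
    with l1 have l1': "1 - a / x \<le> ln (x / a)" by simp
    have "x * (1 - a / x) \<le> x * ln (x / a)" using l1' xp by (simp add: mult_left_mono)
    then have lo: "x - a \<le> x * ln (x / a)" using xp by (simp add: algebra_simps)
    have l2: "ln (x / a) \<le> x / a - 1" using xp a by (intro ln_le_minus_one) simp
    have "x * ln (x / a) \<le> x * (x / a - 1)" using l2 xp by (simp add: mult_left_mono)
    then have up: "x * ln (x / a) \<le> x * x / a - x" by (simp add: algebra_simps)
    have "(x - a)^2 / a = x * x / a - 2 * x + a" using a by (simp add: power2_eq_square field_simps)
    then show ?thesis using e lo up by simp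
  qed
  then show "0 \<le> Rr a x" "Rr a x \<le> (x - a)^2 / a" by auto
qed

lemma bw_xlogx_k:
  assumes q: "0 < q" "q < 1" and n: "0 < n"
  shows "xlogx (real n * q) \<le> (\<Sum>k\<le>n. bw n q k * xlogx (real k))"
    "(\<Sum>k\<le>n. bw n q k * xlogx (real k)) \<le> xlogx (real n * q) + (1 - q)"
proof -
  define a where "a = real n * q"
  have a: "0 < a" using q n by (simp add: a_def)
  have e: "(\<Sum>k\<le>n. bw n q k * xlogx (real k)) = xlogx a * (\<Sum>k\<le>n. bw n q k) + (1 + ln a) * ((\<Sum>k\<le>n. bw n q k * real k) - a * (\<Sum>k\<le>n. bw n q k)) + (\<Sum>k\<le>n. bw n q k * Rr a (real k))"
    by (simp add: Rr_def sum.distrib sum_subtractf sum_distrib_left sum_distrib_right algebra_simps)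
  have e2: "(\<Sum>k\<le>n. bw n q k * xlogx (real k)) = xlogx a + (\<Sum>k\<le>n. bw n q k * Rr a (real k))"
    unfolding e bw_sum bw_mean a_def by simp
  have "0 \<le> (\<Sum>k\<le>n. bw n q k * Rr a (real k))"
    using q a by (intro sum_nonneg mult_nonneg_nonneg bw_nonneg Rr_bounds) auto
  moreover have "(\<Sum>k\<le>n. bw n q k * Rr a (real k)) \<le> (\<Sum>k\<le>n. bw n q k * ((real k - a)^2 / a))"
    using q a by (intro sum_mono mult_left_mono bw_nonneg Rr_bounds) auto
  moreover have "(\<Sum>k\<le>n. bw n q k * ((real k - a)^2 / a)) = (1 - q)"
  proof -
    have "(\<Sum>k\<le>n. bw n q k * ((real k - a)^2 / a)) = (\<Sum>k\<le>n. bw n q k * (real k - a)^2) / a"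
      by (simp add: sum_divide_distrib)
    also have "\<dots> = 1 - q" using q n by (simp add: a_def bw_var)
    finally show ?thesis .
  qed
  ultimately show "xlogx (real n * q) \<le> (\<Sum>k\<le>n. bw n q k * xlogx (real k))"
    "(\<Sum>k\<le>n. bw n q k * xlogx (real k)) \<le> xlogx (real n * q) + (1 - q)"
    using e2 unfolding a_def by auto
qed

lemma bw_xlogx_nk:
  assumes q: "0 < q" "q < 1" and n: "0 < n"
  shows "xlogx (real n * (1 - q)) \<le> (\<Sum>k\<le>n. bw n q k * xlogx (real n - real k))"
    "(\<Sum>k\<le>n. bw n q k * xlogx (real n - real k)) \<le> xlogx (real n * (1 - q)) + q"
proof -
  define b where "b = real n * (1 - q)"
  have b: "0 < b" using q n by (simp add: b_def)
  have e: "(\<Sum>k\<le>n. bw n q k * xlogx (real n - real k)) = xlogx b * (\<Sum>k\<le>n. bw n q k) + (1 + ln b) * ((real n - b) * (\<Sum>k\<le>n. bw n q k) - (\<Sum>k\<le>n. bw n q k * real k)) + (\<Sum>k\<le>n. bw n q k * Rr b (real n - real k))"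
    by (simp add: Rr_def sum.distrib sum_subtractf sum_distrib_left sum_distrib_right algebra_simps)
  have e2: "(\<Sum>k\<le>n. bw n q k * xlogx (real n - real k)) = xlogx b + (\<Sum>k\<le>n. bw n q k * Rr b (real n - real k))"
    unfolding e bw_sum bw_mean b_def by (simp add: algebra_simps)
  have "0 \<le> (\<Sum>k\<le>n. bw n q k * Rr b (real n - real k))"
    using q b by (intro sum_nonneg mult_nonneg_nonneg bw_nonneg Rr_bounds) auto
  moreover have "(\<Sum>k\<le>n. bw n q k * Rr b (real n - real k)) \<le> (\<Sum>k\<le>n. bw n q k * ((real k - real n * q)^2 / b))"
  proof (intro sum_mono mult_left_mono bw_nonneg)
    fix k assume "k \<in> {..n}"
    then have "Rr b (real n - real k) \<le> (real n - real k - b)^2 / b" using b by (intro Rr_bounds) auto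
    also have "(real n - real k - b)^2 = (real k - real n * q)^2" unfolding b_def by (simp add: power2_eq_square algebra_simps)
    finally show "Rr b (real n - real k) \<le> (real k - real n * q)^2 / b" .
  qed (use q in auto)
  moreover have "(\<Sum>k\<le>n. bw n q k * ((real k - real n * q)^2 / b)) = q"
  proof -
    have "(\<Sum>k\<le>n. bw n q k * ((real k - real n * q)^2 / b)) = (\<Sum>k\<le>n. bw n q k * (real k - real n * q)^2) / b"
      by (simp add: sum_divide_distrib)
    also have "\<dots> = q" using q n by (simp add: b_def bw_var)
    finally show ?thesis .
  qed
  ultimately show "xlogx (real n * (1 - q)) \<le> (\<Sum>k\<le>n. bw n q k * xlogx (real n - real k))"
    "(\<Sum>k\<le>n. bw n q k * xlogx (real n - real k)) \<le> xlogx (real n * (1 - q)) + q"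
    using e2 unfolding b_def by auto
qed

lemma sqrt_lower:
  assumes a: "0 < a" and x: "0 \<le> x"
  shows "(3 * a * x - x^2) / (2 * a * sqrt a) \<le> sqrt x"
proof -
  define t where "t = sqrt x"
  define b where "b = sqrt a"
  have t: "0 \<le> t" and b: "0 < b" using a x by (auto simp: t_def b_def)
  have xt: "x = t^2" and ab: "a = b^2" using a x by (auto simp: t_def b_def)
  have key: "0 \<le> t * (t - b)^2 * (t + 2 * b)" using t b by simp
  have sa: "sqrt a = b" by (simp add: b_def)
  have "3 * a * x - x^2 \<le> t * (2 * a * sqrt a)"
    using key unfolding sa unfolding xt ab by (simp add: power2_eq_square algebra_simps)
  then show ?thesis using a unfolding t_def by (simp add: divide_le_eq mult_ac)
qed

lemma bw_sqrt_gen: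
  fixes y :: "nat \<Rightarrow> real"
  assumes q: "0 \<le> q" "q \<le> 1" and c: "0 < c" and y: "\<And>k. k \<le> n \<Longrightarrow> 0 \<le> y k"
    and m1: "(\<Sum>k\<le>n. bw n q k * y k) = c" and m2: "(\<Sum>k\<le>n. bw n q k * (y k)^2) = c^2 + v"
  shows "sqrt c - v / (2 * c * sqrt c) \<le> (\<Sum>k\<le>n. bw n q k * sqrt (y k))"
proof -
  have "(\<Sum>k\<le>n. bw n q k * ((3 * c * y k - (y k)^2) / (2 * c * sqrt c))) \<le> (\<Sum>k\<le>n. bw n q k * sqrt (y k))"
    using q c y by (intro sum_mono mult_left_mono bw_nonneg sqrt_lower) auto
  moreover have "(\<Sum>k\<le>n. bw n q k * ((3 * c * y k - (y k)^2) / (2 * c * sqrt c)))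
     = (3 * c * (\<Sum>k\<le>n. bw n q k * y k) - (\<Sum>k\<le>n. bw n q k * (y k)^2)) / (2 * c * sqrt c)"
    by (simp add: sum_divide_distrib[symmetric] sum_distrib_left sum_subtractf algebra_simps)
  moreover have "(3 * c * c - (c^2 + v)) / (2 * c * sqrt c) = sqrt c - v / (2 * c * sqrt c)"
  proof -
    have "sqrt c * sqrt c = c" using c by simp
    then show ?thesis using c by (simp add: field_simps power2_eq_square)
  qed
  ultimately show ?thesis unfolding m1 m2 by simp
qed

lemma bw_sqrt_bound:
  assumes q: "0 < q" "q < 1" and n: "0 < n"
  shows "sqrt (real n) * (sqrt q + sqrt (1 - q)) - ((1 - q) / (2 * sqrt (real n * q)) + q / (2 * sqrt (real n * (1 - q))))
     \<le> (\<Sum>k\<le>n. bw n q k * (sqrt (real k) + sqrt (real n - real k)))"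
proof -
  define a where "a = real n * q"
  define b where "b = real n * (1 - q)"
  have a: "0 < a" and b: "0 < b" using q n by (auto simp: a_def b_def)
  have A: "sqrt a - a * (1 - q) / (2 * a * sqrt a) \<le> (\<Sum>k\<le>n. bw n q k * sqrt (real k))"
  proof (rule bw_sqrt_gen)
    show "(\<Sum>k\<le>n. bw n q k * real k) = a" by (simp add: bw_mean a_def)
    show "(\<Sum>k\<le>n. bw n q k * (real k)^2) = a^2 + a * (1 - q)"
      using bw_sq[of n q] by (simp add: a_def power2_eq_square algebra_simps)
  qed (use q a in auto)
  have B: "sqrt b - b * q / (2 * b * sqrt b) \<le> (\<Sum>k\<le>n. bw n q k * sqrt (real n - real k))"
  proof (rule bw_sqrt_gen)
    show "(\<Sum>k\<le>n. bw n q k * (real n - real k)) = b"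
      using bw_mean[of n q] bw_sum[of n q] by (simp add: sum_subtractf sum_distrib_left[symmetric] b_def algebra_simps)
    show "(\<Sum>k\<le>n. bw n q k * (real n - real k)^2) = b^2 + b * q"
    proof -
      have "(\<Sum>k\<le>n. bw n q k * (real n - real k)^2) = (\<Sum>k\<le>n. (real n)^2 * bw n q k + ((-2 * real n) * (bw n q k * real k) + bw n q k * (real k)^2))"
        by (rule sum.cong) (simp_all add: power2_eq_square algebra_simps)
      also have "\<dots> = (real n)^2 * (\<Sum>k\<le>n. bw n q k) + ((-2 * real n) * (\<Sum>k\<le>n. bw n q k * real k) + (\<Sum>k\<le>n. bw n q k * (real k)^2))"
        by (simp only: sum.distrib sum_distrib_left[symmetric])
      also have "\<dots> = b^2 + b * q"
        unfolding bw_sum bw_mean bw_sq b_def by (simp add: power2_eq_square algebra_simps)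
      finally show ?thesis .
    qed
  qed (use q b in auto)
  have "sqrt a + sqrt b = sqrt (real n) * (sqrt q + sqrt (1 - q))"
    unfolding a_def b_def real_sqrt_mult by (simp add: algebra_simps)
  moreover have "a * (1 - q) / (2 * a * sqrt a) = (1 - q) / (2 * sqrt a)" using a by simp
  moreover have "b * q / (2 * b * sqrt b) = q / (2 * sqrt b)" using b by simp
  ultimately show ?thesis using A B unfolding a_def b_def by (simp add: sum.distrib distrib_left)
qed


lemma sum_split_ends:
  fixes n :: nat
  assumes "1 \<le> n"
  shows "(\<Sum>k\<le>n. f k) = f 0 + f n + (\<Sum>k\<in>{1..<n}. f k)"
proof -
  have "{..n} = insert 0 (insert n {1..<n})" using assms by fastforce
  moreover have "0 \<notin> insert n {1..<n}" using assms by auto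
  moreover have "n \<notin> {1..<n}" by auto
  ultimately show ?thesis by (simp add: add.assoc)
qed

lemma compare_rec:
  fixes u :: "nat \<Rightarrow> nat \<Rightarrow> real" and \<phi> e :: "nat \<Rightarrow> real" and W :: "nat \<Rightarrow> nat \<Rightarrow> nat \<Rightarrow> real"
  assumes Nst: "2 \<le> Nst"
    and Wnn: "\<And>i n k. i \<in> {0,1} \<Longrightarrow> 0 \<le> W i n k"
    and Wlt: "\<And>i n. i \<in> {0,1} \<Longrightarrow> 2 \<le> n \<Longrightarrow> W i n n + W i n 0 < 1"
    and rec: "\<And>i n. i \<in> {0,1} \<Longrightarrow> Nst \<le> n \<Longrightarrow> \<bar>u i n - (\<Sum>k\<le>n. W i n k * (u 0 k + u 1 (n - k)))\<bar> \<le> e n"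
    and sup: "\<And>i n. i \<in> {0,1} \<Longrightarrow> Nst \<le> n \<Longrightarrow> (\<Sum>k\<le>n. W i n k * (\<phi> k + \<phi> (n - k))) + e n \<le> \<phi> n"
    and base: "\<And>i k. i \<in> {0,1} \<Longrightarrow> k < Nst \<Longrightarrow> \<bar>u i k\<bar> \<le> \<phi> k"
  shows "\<forall>i\<in>{0,1}. \<bar>u i n\<bar> \<le> \<phi> n"
proof (induction n rule: less_induct)
  case (less n)
  show ?case
  proof (cases "n < Nst")
    case True
    then show ?thesis using base by auto
  next
    case False
    then have nn0: "Nst \<le> n" by simp
    have n1: "1 \<le> n" and n2: "2 \<le> n" using nn0 Nst by auto
    define M where "M = max \<bar>u 0 n\<bar> \<bar>u 1 n\<bar>"
    have IH: "\<And>j k. j \<in> {0,1} \<Longrightarrow> k < n \<Longrightarrow> \<bar>u j k\<bar> \<le> \<phi> k" using less by blast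
    have Mge: "\<And>j. j \<in> {0,1} \<Longrightarrow> \<bar>u j n\<bar> \<le> M" unfolding M_def by auto
    have bound: "\<bar>u i n\<bar> \<le> \<phi> n + (W i n 0 + W i n n) * (M - \<phi> n)" if i: "i \<in> {0,1}" for i
    proof -
      define S where "S = (\<Sum>k\<le>n. W i n k * (u 0 k + u 1 (n - k)))"
      define P where "P = (\<Sum>k\<le>n. W i n k * (\<phi> k + \<phi> (n - k)))"
      have Ssplit: "S = W i n 0 * (u 0 0 + u 1 n) + W i n n * (u 0 n + u 1 0) + (\<Sum>k\<in>{1..<n}. W i n k * (u 0 k + u 1 (n - k)))"
        unfolding S_def using sum_split_ends[OF n1, where f="\<lambda>k. W i n k * (u 0 k + u 1 (n - k))"] by simp
      have Psplit: "P = W i n 0 * (\<phi> 0 + \<phi> n) + W i n n * (\<phi> n + \<phi> 0) + (\<Sum>k\<in>{1..<n}. W i n k * (\<phi> k + \<phi> (n - k)))"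
        unfolding P_def using sum_split_ends[OF n1, where f="\<lambda>k. W i n k * (\<phi> k + \<phi> (n - k))"] by simp
      have mid: "\<bar>\<Sum>k\<in>{1..<n}. W i n k * (u 0 k + u 1 (n - k))\<bar> \<le> (\<Sum>k\<in>{1..<n}. W i n k * (\<phi> k + \<phi> (n - k)))"
      proof -
        have "\<bar>\<Sum>k\<in>{1..<n}. W i n k * (u 0 k + u 1 (n - k))\<bar> \<le> (\<Sum>k\<in>{1..<n}. \<bar>W i n k * (u 0 k + u 1 (n - k))\<bar>)"
          by (rule sum_abs)
        also have "\<dots> \<le> (\<Sum>k\<in>{1..<n}. W i n k * (\<phi> k + \<phi> (n - k)))"
        proof (rule sum_mono)
          fix k assume k: "k \<in> {1..<n}"
          have a1: "\<bar>u 0 k\<bar> \<le> \<phi> k" using IH[of 0 k] k by auto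
          have a2: "\<bar>u 1 (n - k)\<bar> \<le> \<phi> (n - k)" using IH[of 1 "n - k"] k by auto
          have "\<bar>u 0 k + u 1 (n - k)\<bar> \<le> \<phi> k + \<phi> (n - k)" using a1 a2 by linarith
          then show "\<bar>W i n k * (u 0 k + u 1 (n - k))\<bar> \<le> W i n k * (\<phi> k + \<phi> (n - k))"
            using Wnn[OF i] by (simp add: abs_mult mult_left_mono)
        qed
        finally show ?thesis .
      qed
      have b0: "\<bar>u 0 0\<bar> \<le> \<phi> 0" "\<bar>u 1 0\<bar> \<le> \<phi> 0" using IH[of 0 0] IH[of 1 0] n1 by auto
      have t1: "\<bar>W i n 0 * (u 0 0 + u 1 n)\<bar> \<le> W i n 0 * (\<phi> 0 + M)"
      proof -
        have "\<bar>u 0 0 + u 1 n\<bar> \<le> \<phi> 0 + M" using b0 Mge[of 1] by auto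
        then show ?thesis using Wnn[OF i] by (simp add: abs_mult mult_left_mono)
      qed
      have t2: "\<bar>W i n n * (u 0 n + u 1 0)\<bar> \<le> W i n n * (M + \<phi> 0)"
      proof -
        have "\<bar>u 0 n + u 1 0\<bar> \<le> M + \<phi> 0" using b0 Mge[of 0] by auto
        then show ?thesis using Wnn[OF i] by (simp add: abs_mult mult_left_mono)
      qed
      have "\<bar>S\<bar> \<le> W i n 0 * (\<phi> 0 + M) + W i n n * (M + \<phi> 0) + (\<Sum>k\<in>{1..<n}. W i n k * (\<phi> k + \<phi> (n - k)))"
        using Ssplit t1 t2 mid by linarith
      also have "\<dots> = P + (W i n 0 + W i n n) * (M - \<phi> n)"
        unfolding Psplit by (simp add: algebra_simps)
      finally have "\<bar>S\<bar> \<le> P + (W i n 0 + W i n n) * (M - \<phi> n)" .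
      moreover have "\<bar>u i n - S\<bar> \<le> e n" using rec[OF i nn0] unfolding S_def .
      moreover have "P + e n \<le> \<phi> n" using sup[OF i nn0] unfolding P_def .
      ultimately show ?thesis by linarith
    qed
    have "M \<le> \<phi> n"
    proof (rule ccontr)
      assume c: "\<not> M \<le> \<phi> n"
      obtain i where i: "i \<in> {0,1}" and Mi: "\<bar>u i n\<bar> = M" unfolding M_def by (metis insertCI max_def)
      have "M \<le> \<phi> n + (W i n 0 + W i n n) * (M - \<phi> n)" using bound[OF i] Mi by simp
      moreover have "(W i n 0 + W i n n) * (M - \<phi> n) < 1 * (M - \<phi> n)"
        using Wlt[OF i n2] c by (intro mult_strict_right_mono) auto
      ultimately show False by simp
    qed
    then show ?thesis using Mge by fastforce
  qed
qed


locale chain =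
  fixes p :: "nat \<Rightarrow> nat \<Rightarrow> real"
  assumes stoch: "\<And>i. i \<in> {0,1} \<Longrightarrow> p i 0 + p i 1 = 1"
    and pos: "\<And>i j. i \<in> {0,1} \<Longrightarrow> j \<in> {0,1} \<Longrightarrow> 0 < p i j \<and> p i j < 1"
begin

lemma q0: "i \<in> {0,1} \<Longrightarrow> 0 < p i 0" using pos[of i 0] by auto
lemma q1: "i \<in> {0,1} \<Longrightarrow> p i 0 < 1" using pos[of i 0] by auto
lemma r0: "i \<in> {0,1} \<Longrightarrow> 0 < p i 1" using pos[of i 1] by auto
lemma r1: "i \<in> {0,1} \<Longrightarrow> p i 1 < 1" using pos[of i 1] by auto
lemma r_eq: "i \<in> {0,1} \<Longrightarrow> p i 1 = 1 - p i 0" using stoch[of i] by simp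

definition W :: "nat \<Rightarrow> nat \<Rightarrow> nat \<Rightarrow> real" where
  "W i n k = bw n (p i 0) k"

lemma W_nonneg: "i \<in> {0,1} \<Longrightarrow> 0 \<le> W i n k"
  unfolding W_def using q0 q1 by (intro bw_nonneg) (auto simp: less_imp_le)

lemma W_sum: "(\<Sum>k\<le>n. W i n k) = 1" unfolding W_def by (rule bw_sum)

lemma W_lt: assumes i: "i \<in> {0,1}" and n: "2 \<le> n" shows "W i n n + W i n 0 < 1"
proof -
  have "W i n n = p i 0 ^ n" "W i n 0 = p i 1 ^ n" using r_eq[OF i] by (auto simp: W_def bw_def)
  moreover have "p i 0 ^ n < p i 0 ^ 1" using n q0[OF i] q1[OF i] by (intro power_strict_decreasing) auto
  moreover have "p i 1 ^ n < p i 1 ^ 1" using n r0[OF i] r1[OF i] by (intro power_strict_decreasing) auto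
  ultimately show ?thesis using stoch[OF i] by simp
qed

lemma W_1: assumes i: "i \<in> {0,1}" and n: "1 \<le> n" shows "W i n 1 = real n * p i 0 * p i 1 ^ (n - 1)"
  using r_eq[OF i] by (simp add: W_def bw_def)

lemma pmf_W: "i \<in> {0,1} \<Longrightarrow> pmf (binomial_pmf n (p i 0)) k = W i n k"
  using q0 q1 by (simp add: W_def bw_def less_imp_le)

lemma expect_W:
  assumes i: "i \<in> {0,1}"
  shows "measure_pmf.expectation (binomial_pmf n (p i 0)) g = (\<Sum>k\<le>n. W i n k * g k)"
proof -
  have "measure_pmf.expectation (binomial_pmf n (p i 0)) g = (\<Sum>k\<in>{..n}. pmf (binomial_pmf n (p i 0)) k *\<^sub>R g k)"
    by (rule integral_measure_pmf[of "{..n}"]) (use q0[OF i] q1[OF i] in auto)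
  then show ?thesis using pmf_W[OF i] by simp
qed

lemma Hi_pos: assumes i: "i \<in> {0,1}" shows "0 < row_entropy p i"
proof -
  have a: "xlogx (p i 0) < 0" using q0[OF i] q1[OF i] by (simp add: xlogx_def mult_pos_neg)
  have b: "xlogx (p i 1) < 0" using r0[OF i] r1[OF i] by (simp add: xlogx_def mult_pos_neg)
  show ?thesis using a b by (simp add: row_entropy_def)
qed

lemma row_entropy_eq: "i \<in> {0,1} \<Longrightarrow> row_entropy p i = - (xlogx (p i 0) + xlogx (p i 1))"
  by (simp add: row_entropy_def)

lemma pi0_pos: "0 < stat_pi p 0" using r0[of 0] q0[of 1] by (simp add: stat_pi_def)
lemma pi1_pos: "0 < stat_pi p 1" using r0[of 0] q0[of 1] by (simp add: stat_pi_def)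
lemma pi_sum: "stat_pi p 0 + stat_pi p 1 = 1"
proof -
  have "p 0 1 + p 1 0 \<noteq> 0" using r0[of 0] q0[of 1] by simp
  then show ?thesis by (simp add: stat_pi_def add_divide_distrib[symmetric] add.commute)
qed

definition HH where "HH = entropy_H p"

lemma HH_pos: "0 < HH"
  unfolding HH_def entropy_H_def using pi0_pos pi1_pos Hi_pos[of 0] Hi_pos[of 1]
  by (simp add: add_pos_pos)

definition DD where "DD = (row_entropy p 1 - row_entropy p 0) / (p 0 1 + p 1 0)"
definition c0 where "c0 = DD / HH"

definition F :: "nat \<Rightarrow> nat \<Rightarrow> real" where
  "F j k = xlogx (real k) / HH + (if j = 0 then c0 * real k - (if k = 1 then c0 else 0) else 0)"

lemma F_small: "k \<le> 1 \<Longrightarrow> F j k = 0"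
  by (cases k) (auto simp: F_def xlogx_def)

lemma sum_W_lin: "(\<Sum>k\<le>n. W i n k * (f k + c)) = (\<Sum>k\<le>n. W i n k * f k) + c"
  using W_sum[of i n] by (simp add: distrib_left sum.distrib sum_distrib_right[symmetric])

lemma F_rec:
  assumes i: "i \<in> {0,1}" and n: "2 \<le> n"
  shows "(\<Sum>k\<le>n. W i n k * (F 0 k + F 1 (n - k) + eta1 p i n)) = F i n"
proof -
  define E where "E = (\<Sum>k\<le>n. W i n k * (xlogx (real k) + xlogx (real n - real k)))"
  have eta: "eta1 p i n = (xlogx (real n) - E) / HH + stat_pi p (1 - i) * (row_entropy p (1 - i) - row_entropy p i) / HH * real n
      + c0 * W i n 1"
    unfolding eta1_def expect_W[OF i] E_def using n W_1[OF i, of n] HH_pos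
    by (simp add: HH_def c0_def DD_def divide_simps)
  have s1: "(\<Sum>k\<le>n. W i n k * (F 0 k + F 1 (n - k))) = E / HH + c0 * (real n * p i 0) - c0 * W i n 1"
  proof -
    have "(\<Sum>k\<le>n. W i n k * (F 0 k + F 1 (n - k))) = (\<Sum>k\<le>n. (W i n k * (xlogx (real k) + xlogx (real n - real k))) / HH + c0 * (W i n k * real k) - (if k = 1 then c0 * W i n k else 0))"
      by (rule sum.cong) (auto simp: F_def of_nat_diff algebra_simps add_divide_distrib)
    also have "\<dots> = E / HH + c0 * (\<Sum>k\<le>n. W i n k * real k) - c0 * W i n 1"
      using n by (simp add: sum.distrib sum_subtractf sum_divide_distrib[symmetric] sum_distrib_left[symmetric] E_def)
    also have "(\<Sum>k\<le>n. W i n k * real k) = real n * p i 0" unfolding W_def by (rule bw_mean)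
    finally show ?thesis .
  qed
  have "(\<Sum>k\<le>n. W i n k * (F 0 k + F 1 (n - k) + eta1 p i n)) = xlogx (real n) / HH + c0 * (real n * p i 0) + stat_pi p (1 - i) * (row_entropy p (1 - i) - row_entropy p i) / HH * real n"
    unfolding sum_W_lin s1 eta using HH_pos by (simp add: field_simps)
  also have "\<dots> = F i n"
  proof -
    have den: "p 0 1 + p 1 0 > 0" using r0[of 0] q0[of 1] by simp
    show ?thesis
    proof (cases "i = 0")
      case True
      have e1: "stat_pi p 1 * (row_entropy p 1 - row_entropy p 0) / HH = c0 * p 0 1"
        using den HH_pos by (simp add: c0_def DD_def stat_pi_def field_simps)
      have "c0 * (real n * p 0 0) + stat_pi p 1 * (row_entropy p 1 - row_entropy p 0) / HH * real n = c0 * real n * (p 0 0 + p 0 1)"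
        unfolding e1 by (simp add: algebra_simps)
      then have "c0 * (real n * p 0 0) + stat_pi p 1 * (row_entropy p 1 - row_entropy p 0) / HH * real n = c0 * real n"
        using stoch[of 0] by simp
      then show ?thesis using True n by (simp add: F_def)
    next
      case False
      then have i1: "i = 1" using i by simp
      have e2': "stat_pi p 0 * (row_entropy p 1 - row_entropy p 0) / HH = c0 * p 1 0"
        using den HH_pos by (simp add: c0_def DD_def stat_pi_def field_simps)
      have e3: "stat_pi p 0 * (row_entropy p 0 - row_entropy p 1) / HH = - (stat_pi p 0 * (row_entropy p 1 - row_entropy p 0) / HH)"
        using HH_pos by (simp add: field_simps)
      have e2: "stat_pi p 0 * (row_entropy p 0 - row_entropy p 1) / HH = - (c0 * p 1 0)"
        unfolding e3 e2' ..
      have "c0 * (real n * p 1 0) + stat_pi p 0 * (row_entropy p 0 - row_entropy p 1) / HH * real n = 0"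
        unfolding e2 by (simp add: algebra_simps)
      then show ?thesis using i1 n by (simp add: F_def)
    qed
  qed
  finally show ?thesis .
qed

theorem mean_formula:
  fixes m :: "nat \<Rightarrow> nat \<Rightarrow> real"
  assumes base: "\<And>j k. j \<in> {0,1} \<Longrightarrow> k \<le> 1 \<Longrightarrow> m j k = 0"
    and mrec: "\<And>i n. i \<in> {0,1} \<Longrightarrow> 2 \<le> n \<Longrightarrow> m i n = (\<Sum>k\<le>n. W i n k * (m 0 k + m 1 (n - k) + eta1 p i n))"
  shows "\<And>j n. j \<in> {0,1} \<Longrightarrow> m j n = F j n"
proof -
  define u where "u j k = m j k - F j k" for j k
  have R: "\<bar>u i n - (\<Sum>k\<le>n. W i n k * (u 0 k + u 1 (n - k)))\<bar> \<le> 0" if i: "i \<in> {0,1}" and n: "2 \<le> n" for i n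
  proof -
    have "u i n - (\<Sum>k\<le>n. W i n k * (u 0 k + u 1 (n - k)))
        = (m i n - (\<Sum>k\<le>n. W i n k * (m 0 k + m 1 (n - k)))) - (F i n - (\<Sum>k\<le>n. W i n k * (F 0 k + F 1 (n - k))))"
      unfolding u_def by (simp add: sum_subtractf algebra_simps)
    also have "\<dots> = 0"
      using mrec[OF i n] F_rec[OF i n] by (simp add: sum_W_lin)
    finally show ?thesis by simp
  qed
  have Bs: "\<bar>u i k\<bar> \<le> 0" if "i \<in> {0,1}" "k < 2" for i k
    using that base F_small unfolding u_def by auto
  have "\<forall>i\<in>{0,1}. \<bar>u i n\<bar> \<le> (\<lambda>_. 0::real) n" for n
    by (rule compare_rec[where u=u and \<phi>="\<lambda>_. 0" and W=W and e="\<lambda>_. 0" and Nst=2]) (use R Bs W_nonneg W_lt in auto)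
  then show "\<And>j n. j \<in> {0,1} \<Longrightarrow> m j n = F j n" unfolding u_def by force
qed

end


lemma wvar_shift:
  fixes w g :: "nat \<Rightarrow> real"
  assumes s1: "(\<Sum>k\<le>n. w k) = 1"
  shows "(\<Sum>k\<le>n. w k * (g k + c)^2) - (\<Sum>k\<le>n. w k * (g k + c))^2 = (\<Sum>k\<le>n. w k * (g k)^2) - (\<Sum>k\<le>n. w k * g k)^2"
proof -
  have a: "(\<Sum>k\<le>n. w k * (g k + c)^2) = (\<Sum>k\<le>n. w k * (g k)^2) + 2 * c * (\<Sum>k\<le>n. w k * g k) + c^2 * (\<Sum>k\<le>n. w k)"
  proof -
    have "(\<Sum>k\<le>n. w k * (g k + c)^2) = (\<Sum>k\<le>n. w k * (g k)^2 + (2 * c * (w k * g k) + c^2 * w k))"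
      by (rule sum.cong) (simp_all add: power2_eq_square algebra_simps)
    then show ?thesis by (simp only: sum.distrib sum_distrib_left[symmetric] add.assoc)
  qed
  have b: "(\<Sum>k\<le>n. w k * (g k + c)) = (\<Sum>k\<le>n. w k * g k) + c * (\<Sum>k\<le>n. w k)"
    by (simp add: distrib_left sum.distrib sum_distrib_left mult.commute)
  show ?thesis unfolding a b s1 by (simp add: power2_eq_square algebra_simps)
qed

lemma wvar_bound:
  fixes w g lam rho :: "nat \<Rightarrow> real"
  assumes s1: "(\<Sum>k\<le>n. w k) = 1" and wn: "\<And>k. k \<le> n \<Longrightarrow> 0 \<le> w k"
    and gdec: "\<And>k. k \<le> n \<Longrightarrow> g k = c + lam k + rho k"
    and l0: "(\<Sum>k\<le>n. w k * lam k) = 0" and t: "0 < t"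
  shows "\<bar>((\<Sum>k\<le>n. w k * (g k)^2) - (\<Sum>k\<le>n. w k * g k)^2) - (\<Sum>k\<le>n. w k * (lam k)^2)\<bar>
     \<le> t * (\<Sum>k\<le>n. w k * (lam k)^2) + (1 + 1 / t) * (\<Sum>k\<le>n. w k * (rho k)^2)"
proof -
  define A where "A = (\<Sum>k\<le>n. w k * (lam k)^2)"
  define B where "B = (\<Sum>k\<le>n. w k * (rho k)^2)"
  define X where "X = (\<Sum>k\<le>n. w k * (lam k * rho k))"
  define E where "E = (\<Sum>k\<le>n. w k * rho k)"
  have g2: "(\<Sum>k\<le>n. w k * (g k)^2) = c^2 * (\<Sum>k\<le>n. w k) + A + B + 2 * c * (\<Sum>k\<le>n. w k * lam k) + 2 * c * E + 2 * X"
  proof -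
    have "(\<Sum>k\<le>n. w k * (g k)^2) = (\<Sum>k\<le>n. c^2 * w k + w k * (lam k)^2 + w k * (rho k)^2 + 2 * c * (w k * lam k) + 2 * c * (w k * rho k) + 2 * (w k * (lam k * rho k)))"
      by (rule sum.cong) (simp_all add: gdec power2_eq_square algebra_simps)
    then show ?thesis unfolding A_def B_def E_def X_def by (simp only: sum.distrib sum_distrib_left[symmetric])
  qed
  have g1: "(\<Sum>k\<le>n. w k * g k) = c * (\<Sum>k\<le>n. w k) + (\<Sum>k\<le>n. w k * lam k) + E"
  proof -
    have "(\<Sum>k\<le>n. w k * g k) = (\<Sum>k\<le>n. c * w k + w k * lam k + w k * rho k)"
      by (rule sum.cong) (simp_all add: gdec algebra_simps)
    then show ?thesis unfolding E_def by (simp only: sum.distrib sum_distrib_left[symmetric])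
  qed
  have var: "((\<Sum>k\<le>n. w k * (g k)^2) - (\<Sum>k\<le>n. w k * g k)^2) - A = B - E^2 + 2 * X"
    unfolding g2 g1 s1 l0 by (simp add: power2_eq_square algebra_simps)
  have EB: "E^2 \<le> B"
  proof -
    have "0 \<le> (\<Sum>k\<le>n. w k * (rho k - E)^2)" using wn by (intro sum_nonneg) auto
    also have "(\<Sum>k\<le>n. w k * (rho k - E)^2) = B - 2 * E * E + E^2 * (\<Sum>k\<le>n. w k)"
    proof -
      have "(\<Sum>k\<le>n. w k * (rho k - E)^2) = (\<Sum>k\<le>n. w k * (rho k)^2 + (- 2 * E) * (w k * rho k) + E^2 * w k)"
        by (rule sum.cong) (simp_all add: power2_eq_square algebra_simps)
      also have "\<dots> = B + (- 2 * E) * E + E^2 * (\<Sum>k\<le>n. w k)"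
        unfolding B_def E_def by (simp only: sum.distrib sum_distrib_left[symmetric])
      finally show ?thesis by simp
    qed
    finally show ?thesis using s1 by (simp add: power2_eq_square)
  qed
  have B0: "0 \<le> B" unfolding B_def using wn by (intro sum_nonneg) auto
  have XB: "\<bar>2 * X\<bar> \<le> t * A + (1 / t) * B"
  proof -
    have "\<bar>2 * X\<bar> \<le> (\<Sum>k\<le>n. \<bar>2 * (w k * (lam k * rho k))\<bar>)"
      unfolding X_def sum_distrib_left by (rule sum_abs)
    also have "\<dots> \<le> (\<Sum>k\<le>n. t * (w k * (lam k)^2) + (1 / t) * (w k * (rho k)^2))"
    proof (rule sum_mono)
      fix k assume k: "k \<in> {..n}"
      have "0 \<le> (t * lam k - rho k)^2 / t" using t by simp
      moreover have "0 \<le> (t * lam k + rho k)^2 / t" using t by simp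
      moreover have "(t * lam k - rho k)^2 / t = t * (lam k)^2 - 2 * (lam k * rho k) + (rho k)^2 / t"
        using t by (simp add: power2_eq_square field_simps)
      moreover have "(t * lam k + rho k)^2 / t = t * (lam k)^2 + 2 * (lam k * rho k) + (rho k)^2 / t"
        using t by (simp add: power2_eq_square field_simps)
      ultimately have "\<bar>2 * (lam k * rho k)\<bar> \<le> t * (lam k)^2 + (rho k)^2 / t" by linarith
      then have "w k * \<bar>2 * (lam k * rho k)\<bar> \<le> w k * (t * (lam k)^2 + (rho k)^2 / t)"
        using wn k by (intro mult_left_mono) auto
      then show "\<bar>2 * (w k * (lam k * rho k))\<bar> \<le> t * (w k * (lam k)^2) + (1 / t) * (w k * (rho k)^2)"
        using wn k by (simp add: abs_mult algebra_simps)
    qed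
    also have "\<dots> = t * A + (1 / t) * B"
      unfolding A_def B_def by (simp only: sum.distrib sum_distrib_left[symmetric])
    finally show ?thesis .
  qed
  have E0: "0 \<le> E^2" by simp
  have A0: "0 \<le> A" unfolding A_def using wn by (intro sum_nonneg) auto
  have eqB: "(1 + 1 / t) * B = B + (1 / t) * B" by (simp add: algebra_simps)
  have XB': "2 * X \<le> t * A + (1 / t) * B" "- (2 * X) \<le> t * A + (1 / t) * B" using XB by auto
  have "\<bar>B - E^2 + 2 * X\<bar> \<le> t * A + (1 + 1 / t) * B"
  proof (rule abs_leI)
    show "B - E^2 + 2 * X \<le> t * A + (1 + 1 / t) * B" unfolding eqB using XB' EB B0 E0 by linarith
    show "- (B - E^2 + 2 * X) \<le> t * A + (1 + 1 / t) * B" unfolding eqB using XB' EB B0 E0 by linarith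
  qed
  then show ?thesis using var unfolding A_def B_def by simp
qed

context chain begin

definition fsum :: "nat \<Rightarrow> nat \<Rightarrow> real" where "fsum n k = F 0 k + F 1 (n - k)"

definition T :: "nat \<Rightarrow> nat \<Rightarrow> real" where
  "T i n = (\<Sum>k\<le>n. W i n k * (fsum n k)^2) - (\<Sum>k\<le>n. W i n k * fsum n k)^2"

definition sl :: "nat \<Rightarrow> real" where "sl i = (ln (p i 0) - ln (p i 1)) / HH + c0"
definition al :: "nat \<Rightarrow> real" where "al i = (sl i)^2 * p i 0 * p i 1"
definition Krho :: "nat \<Rightarrow> real" where "Krho i = 8 / (p i 0 * p i 1 * HH)^2 + 2 * c0^2"

lemma W_1_le: "i \<in> {0,1} \<Longrightarrow> 1 \<le> n \<Longrightarrow> W i n 1 \<le> 1"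
  using member_le_sum[of 1 "{..n}" "W i n"] W_nonneg W_sum[of i n] by auto

lemma T_bound:
  assumes i: "i \<in> {0,1}" and n: "1 \<le> n"
  shows "\<bar>T i n - al i * real n\<bar> \<le> (al i + 2 * Krho i) * sqrt (real n)"
proof -
  define q where "q = p i 0"
  define r where "r = p i 1"
  have q: "0 < q" "q < 1" and r: "0 < r" "r < 1" and rq: "r = 1 - q"
    using q0[OF i] q1[OF i] r0[OF i] r1[OF i] r_eq[OF i] by (auto simp: q_def r_def)
  have np: "0 < real n" using n by simp
  define a where "a = real n * q"
  define b where "b = real n * r"
  have a: "0 < a" and b: "0 < b" using q r np by (auto simp: a_def b_def)
  have ab: "real n - a = b" unfolding a_def b_def rq by (simp add: algebra_simps)
  define c where "c = (xlogx a + xlogx b) / HH + c0 * a"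
  define lam where "lam k = sl i * (real k - a)" for k
  define rho where "rho k = (Rr a (real k) + Rr b (real n - real k)) / HH - (if k = 1 then c0 else 0)" for k
  have lnab: "ln a - ln b = ln q - ln r" using q r np by (simp add: a_def b_def ln_mult)
  have dec: "fsum n k = c + lam k + rho k" if k: "k \<le> n" for k
  proof -
    have "fsum n k = xlogx (real k) / HH + c0 * real k - (if k = 1 then c0 else 0) + xlogx (real n - real k) / HH"
      using k by (simp add: fsum_def F_def of_nat_diff)
    also have "\<dots> = c + lam k + rho k"
      unfolding c_def lam_def rho_def Rr_def sl_def q_def[symmetric] r_def[symmetric] lnab[symmetric]
      using HH_pos ab by (simp add: field_simps)
    finally show ?thesis .
  qed
  have Ws: "(\<Sum>k\<le>n. W i n k) = 1" by (rule W_sum)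
  have Wm: "(\<Sum>k\<le>n. W i n k * real k) = a" unfolding W_def a_def q_def by (rule bw_mean)
  have Wv: "(\<Sum>k\<le>n. W i n k * (real k - a)^2) = real n * q * r" unfolding W_def a_def q_def rq by (rule bw_var)
  have l0: "(\<Sum>k\<le>n. W i n k * lam k) = 0"
  proof -
    have "(\<Sum>k\<le>n. W i n k * lam k) = sl i * ((\<Sum>k\<le>n. W i n k * real k) - a * (\<Sum>k\<le>n. W i n k))"
      unfolding lam_def by (simp add: sum_distrib_left sum_subtractf algebra_simps)
    then show ?thesis unfolding Wm Ws by simp
  qed
  have lam2: "(\<Sum>k\<le>n. W i n k * (lam k)^2) = al i * real n"
  proof -
    have "(\<Sum>k\<le>n. W i n k * (lam k)^2) = (\<Sum>k\<le>n. (sl i)^2 * (W i n k * (real k - a)^2))"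
      by (rule sum.cong) (simp_all add: lam_def power2_eq_square algebra_simps)
    then have "(\<Sum>k\<le>n. W i n k * (lam k)^2) = (sl i)^2 * (\<Sum>k\<le>n. W i n k * (real k - a)^2)"
      by (simp add: sum_distrib_left)
    then show ?thesis unfolding Wv al_def q_def r_def by simp
  qed
  have rho2: "(\<Sum>k\<le>n. W i n k * (rho k)^2) \<le> Krho i"
  proof -
    define z where "z = real n * q * r * HH"
    have z: "0 < z" using np q r HH_pos by (simp add: z_def)
    have pt: "(rho k)^2 \<le> 2 * ((real k - a)^4 / z^2) + 2 * (if k = 1 then c0^2 else 0)" if k: "k \<le> n" for k
    proof -
      define x where "x = (Rr a (real k) + Rr b (real n - real k)) / HH"
      have x0: "0 \<le> x" unfolding x_def using a b k HH_pos by (intro divide_nonneg_pos add_nonneg_nonneg Rr_bounds) auto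
      have "Rr a (real k) + Rr b (real n - real k) \<le> (real k - a)^2 / a + (real n - real k - b)^2 / b"
        using a b k by (intro add_mono Rr_bounds) auto
      also have "(real n - real k - b)^2 = (real k - a)^2" using ab by (simp add: power2_eq_square algebra_simps)
      also have "(real k - a)^2 / a + (real k - a)^2 / b = (real k - a)^2 * HH / z"
      proof -
        have s1: "1 / a + 1 / b = (a + b) / (a * b)" using a b by (simp add: field_simps)
        have s2: "a + b = real n" unfolding a_def b_def rq by (simp add: algebra_simps)
        have s3: "a * b = real n * (real n * q * r)" unfolding a_def b_def by simp
        have "1 / a + 1 / b = HH / z" unfolding s1 s2 s3 z_def using np HH_pos q r by (simp add: field_simps)
        then have "(real k - a)^2 * (1 / a + 1 / b) = (real k - a)^2 * (HH / z)" by simp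
        then show ?thesis by (simp add: algebra_simps)
      qed
      finally have "x \<le> (real k - a)^2 / z" unfolding x_def using HH_pos by (simp add: divide_le_eq mult.commute)
      then have x2: "x^2 \<le> ((real k - a)^2 / z)^2" using x0 by (intro power_mono) auto
      have "(rho k)^2 = (x - (if k = 1 then c0 else 0))^2" unfolding rho_def x_def by simp
      also have "\<dots> \<le> 2 * x^2 + 2 * (if k = 1 then c0 else 0)^2"
        using sum_squares_ge_zero[of "x + (if k = 1 then c0 else 0)" 0] by (simp add: power2_eq_square algebra_simps)
      also have "\<dots> \<le> 2 * ((real k - a)^2 / z)^2 + 2 * (if k = 1 then c0^2 else 0)"
      proof -
        have ie: "(if k = 1 then c0 else 0)^2 = (if k = 1 then c0^2 else 0)" by simp
        show ?thesis unfolding ie using x2 by linarith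
      qed
      finally show ?thesis by (simp add: power_divide power_mult[symmetric])
    qed
    have "(\<Sum>k\<le>n. W i n k * (rho k)^2) \<le> (\<Sum>k\<le>n. W i n k * (2 * ((real k - a)^4 / z^2) + 2 * (if k = 1 then c0^2 else 0)))"
      using pt W_nonneg[OF i] by (intro sum_mono mult_left_mono) auto
    also have "\<dots> = 2 / z^2 * (\<Sum>k\<le>n. W i n k * (real k - a)^4) + 2 * c0^2 * W i n 1"
    proof -
      have "(\<Sum>k\<le>n. W i n k * (2 * ((real k - a)^4 / z^2) + 2 * (if k = 1 then c0^2 else 0)))
          = (\<Sum>k\<le>n. 2 / z^2 * (W i n k * (real k - a)^4) + (if k = 1 then 2 * c0^2 * W i n k else 0))"
        by (rule sum.cong) (simp_all add: algebra_simps)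
      also have "\<dots> = 2 / z^2 * (\<Sum>k\<le>n. W i n k * (real k - a)^4) + 2 * c0^2 * W i n 1"
        using n by (simp add: sum.distrib sum_distrib_left)
      finally show ?thesis .
    qed
    also have "\<dots> \<le> 2 / z^2 * (3 * (real n)^2 + real n) + 2 * c0^2 * 1"
    proof (intro add_mono mult_left_mono)
      show "(\<Sum>k\<le>n. W i n k * (real k - a)^4) \<le> 3 * (real n)^2 + real n"
        unfolding W_def a_def q_def using q by (intro bw_m4_bound) (auto simp: q_def)
      show "W i n 1 \<le> 1" using W_1_le[OF i n] .
    qed auto
    also have "\<dots> \<le> 8 / (q * r * HH)^2 + 2 * c0^2"
    proof -
      have "3 * (real n)^2 + real n \<le> 4 * (real n)^2" using n by (simp add: power2_eq_square)
      then have "2 / z^2 * (3 * (real n)^2 + real n) \<le> 2 / z^2 * (4 * (real n)^2)"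
        using z by (intro mult_left_mono) auto
      also have "2 / z^2 * (4 * (real n)^2) = 8 / (q * r * HH)^2"
        using np q r HH_pos unfolding z_def by (simp add: field_simps power2_eq_square)
      finally show ?thesis by simp
    qed
    finally show ?thesis unfolding Krho_def q_def r_def .
  qed
  have sq: "0 < sqrt (real n)" "1 \<le> sqrt (real n)" using n by auto
  have main: "\<bar>T i n - al i * real n\<bar> \<le> (1 / sqrt (real n)) * (al i * real n) + (1 + 1 / (1 / sqrt (real n))) * (\<Sum>k\<le>n. W i n k * (rho k)^2)"
    unfolding T_def lam2[symmetric]
    by (rule wvar_bound[where c=c and lam=lam and rho=rho]) (use Ws W_nonneg[OF i] dec l0 sq in auto)
  have "(1 / sqrt (real n)) * (al i * real n) = al i * sqrt (real n)"
    using sq by (simp add: field_simps)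
  moreover have "(1 + 1 / (1 / sqrt (real n))) * (\<Sum>k\<le>n. W i n k * (rho k)^2) \<le> (1 + sqrt (real n)) * Krho i"
  proof -
    have "1 / (1 / sqrt (real n)) = sqrt (real n)" by simp
    moreover have "(1 + sqrt (real n)) * (\<Sum>k\<le>n. W i n k * (rho k)^2) \<le> (1 + sqrt (real n)) * Krho i"
      using rho2 sq by (intro mult_left_mono) auto
    ultimately show ?thesis by simp
  qed
  moreover have "(1 + sqrt (real n)) * Krho i \<le> 2 * Krho i * sqrt (real n)"
  proof -
    have "0 \<le> Krho i" unfolding Krho_def by simp
    then have "Krho i * 1 \<le> Krho i * sqrt (real n)" using sq by (intro mult_left_mono) auto
    then show ?thesis by (simp add: algebra_simps)
  qed
  ultimately show ?thesis using main by (simp add: algebra_simps)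
qed

end


context chain begin

definition sig where "sig = sigma2 p"

lemma sig_nonneg: "0 \<le> sig"
proof -
  have "0 < entropy_H p" using HH_pos by (simp add: HH_def)
  then show ?thesis unfolding sig_def sigma2_def using pi0_pos pi1_pos q0[of 0] r0[of 0] q0[of 1] r0[of 1]
  by (intro add_nonneg_nonneg mult_nonneg_nonneg divide_nonneg_pos) auto
qed

lemma al_nonneg: "i \<in> {0,1} \<Longrightarrow> 0 \<le> al i"
  unfolding al_def using q0 r0 by (simp add: less_imp_le)

lemma Krho_nonneg: "0 \<le> Krho i" unfolding Krho_def by simp

lemma sl_eq: assumes i: "i \<in> {0,1}" shows "sl i = (ln (p i 0 / p i 1) + DD) / HH"
  unfolding sl_def c0_def using q0[OF i] r0[OF i] HH_pos by (simp add: ln_div add_divide_distrib)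

lemma al_identity: "stat_pi p 0 * al 0 + stat_pi p 1 * al 1 = sig * HH"
proof -
  have s0: "sl 0 = (ln (p 0 0 / p 0 1) + DD) / HH" using sl_eq[of 0] by simp
  have s1: "sl 1 = (ln (p 1 0 / p 1 1) + DD) / HH" using sl_eq[of 1] by simp
  have A0: "al 0 = p 0 0 * p 0 1 / HH^2 * (ln (p 0 0 / p 0 1) + DD)^2"
    unfolding al_def s0 by (simp add: power_divide)
  have A1: "al 1 = p 1 0 * p 1 1 / HH^2 * (ln (p 1 0 / p 1 1) + DD)^2"
    unfolding al_def s1 by (simp add: power_divide)
  have S: "sig = stat_pi p 0 * p 0 0 * p 0 1 / HH^3 * (ln (p 0 0 / p 0 1) + DD)^2
      + stat_pi p 1 * p 1 0 * p 1 1 / HH^3 * (ln (p 1 0 / p 1 1) + DD)^2"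
    unfolding sig_def sigma2_def DD_def HH_def ..
  show ?thesis unfolding A0 A1 S using HH_pos by (simp add: field_simps power2_eq_square power3_eq_cube)
qed

definition dd :: "nat \<Rightarrow> real" where
  "dd j = (if j = 0 then (al 0 - sig * row_entropy p 0) / p 0 1 else 0)"

lemma dd_eq: assumes i: "i \<in> {0,1}"
  shows "dd i - dd 0 * p i 0 - dd 1 * p i 1 = al i - sig * row_entropy p i"
proof (cases "i = 0")
  case True
  have "dd 0 * (p 0 0 + p 0 1) = dd 0" using stoch[of 0] by simp
  then have "dd 0 - dd 0 * p 0 0 = dd 0 * p 0 1" by (simp add: algebra_simps)
  then show ?thesis using True r0[of 0] by (simp add: dd_def)
next
  case False
  then have i1: "i = 1" using i by simp
  have HHe: "HH = stat_pi p 0 * row_entropy p 0 + stat_pi p 1 * row_entropy p 1"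
    unfolding HH_def entropy_H_def ..
  have id: "stat_pi p 0 * al 0 + stat_pi p 1 * al 1 = sig * (stat_pi p 0 * row_entropy p 0 + stat_pi p 1 * row_entropy p 1)"
    using al_identity HHe by simp
  define s where "s = p 0 1 + p 1 0"
  have s: "0 < s" using r0[of 0] q0[of 1] by (simp add: s_def)
  have e1: "s * (stat_pi p 0 * x + stat_pi p 1 * y) = p 1 0 * x + p 0 1 * y" for x y
    using s unfolding stat_pi_def s_def[symmetric] by (simp add: field_simps)
  have "p 1 0 * al 0 + p 0 1 * al 1 = sig * (p 1 0 * row_entropy p 0 + p 0 1 * row_entropy p 1)"
  proof -
    have "p 1 0 * al 0 + p 0 1 * al 1 = s * (stat_pi p 0 * al 0 + stat_pi p 1 * al 1)" by (rule e1[symmetric])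
    also have "\<dots> = sig * (s * (stat_pi p 0 * row_entropy p 0 + stat_pi p 1 * row_entropy p 1))"
      unfolding id by simp
    also have "\<dots> = sig * (p 1 0 * row_entropy p 0 + p 0 1 * row_entropy p 1)" unfolding e1 ..
    finally show ?thesis .
  qed
  then have "- ((al 0 - sig * row_entropy p 0) / p 0 1 * p 1 0) = al 1 - sig * row_entropy p 1"
    using r0[of 0] by (simp add: field_simps)
  then show ?thesis using i1 by (simp add: dd_def)
qed

definition Wf :: "nat \<Rightarrow> nat \<Rightarrow> real" where
  "Wf j k = sig * xlogx (real k) + dd j * real k"

lemma Wf_resid:
  assumes i: "i \<in> {0,1}" and n: "1 \<le> n"
  shows "\<exists>\<rho>. 0 \<le> \<rho> \<and> \<rho> \<le> 1 \<and>
    Wf i n - (\<Sum>k\<le>n. W i n k * (Wf 0 k + Wf 1 (n - k))) = al i * real n - sig * \<rho>"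
proof -
  define q where "q = p i 0"
  define r where "r = p i 1"
  have q: "0 < q" "q < 1" and r: "0 < r" and rq: "r = 1 - q"
    using q0[OF i] q1[OF i] r0[OF i] r_eq[OF i] by (auto simp: q_def r_def)
  have np: "0 < real n" "0 < n" using n by auto
  define Ex1 where "Ex1 = (\<Sum>k\<le>n. W i n k * (xlogx (real k) + xlogx (real n - real k)))"
  define \<rho> where "\<rho> = Ex1 - (xlogx (real n * q) + xlogx (real n * r))"
  have EXsplit: "Ex1 = (\<Sum>k\<le>n. W i n k * xlogx (real k)) + (\<Sum>k\<le>n. W i n k * xlogx (real n - real k))"
    unfolding Ex1_def by (simp add: distrib_left sum.distrib)
  have b1: "xlogx (real n * q) \<le> (\<Sum>k\<le>n. W i n k * xlogx (real k))"
    "(\<Sum>k\<le>n. W i n k * xlogx (real k)) \<le> xlogx (real n * q) + (1 - q)"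
    unfolding W_def q_def[symmetric] using bw_xlogx_k[OF q np(2)] by auto
  have b2: "xlogx (real n * r) \<le> (\<Sum>k\<le>n. W i n k * xlogx (real n - real k))"
    "(\<Sum>k\<le>n. W i n k * xlogx (real n - real k)) \<le> xlogx (real n * r) + q"
    unfolding W_def q_def[symmetric] rq using bw_xlogx_nk[OF q np(2)] by auto
  have rho: "0 \<le> \<rho>" "\<rho> \<le> 1" unfolding \<rho>_def EXsplit using b1 b2 by auto
  have ent: "xlogx (real n) - (xlogx (real n * q) + xlogx (real n * r)) = real n * row_entropy p i"
  proof -
    have H: "row_entropy p i = - (q * ln q + r * ln r)"
      unfolding row_entropy_eq[OF i] q_def[symmetric] r_def[symmetric] using q r by (simp add: xlogx_pos)
    have X1: "xlogx (real n * q) = real n * q * (ln (real n) + ln q)" using np q by (simp add: xlogx_pos ln_mult)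
    have X2: "xlogx (real n * r) = real n * r * (ln (real n) + ln r)" using np r by (simp add: xlogx_pos ln_mult)
    have X0: "xlogx (real n) = real n * ln (real n)" using np by (simp add: xlogx_pos)
    have qr: "q + r = 1" using rq by simp
    have "xlogx (real n) - (xlogx (real n * q) + xlogx (real n * r)) = real n * ln (real n) * (1 - (q + r)) - real n * (q * ln q + r * ln r)"
      unfolding X0 X1 X2 by (simp add: algebra_simps)
    also have "\<dots> = real n * row_entropy p i" unfolding qr H by (simp add: algebra_simps)
    finally show ?thesis .
  qed
  have sumWf: "(\<Sum>k\<le>n. W i n k * (Wf 0 k + Wf 1 (n - k))) = sig * Ex1 + dd 0 * (\<Sum>k\<le>n. W i n k * real k) + dd 1 * (\<Sum>k\<le>n. W i n k * (real n - real k))"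
  proof -
    have "(\<Sum>k\<le>n. W i n k * (Wf 0 k + Wf 1 (n - k))) = (\<Sum>k\<le>n. sig * (W i n k * (xlogx (real k) + xlogx (real n - real k))) + dd 0 * (W i n k * real k) + dd 1 * (W i n k * (real n - real k)))"
      by (rule sum.cong) (auto simp: Wf_def of_nat_diff algebra_simps)
    then show ?thesis unfolding Ex1_def by (simp only: sum.distrib sum_distrib_left[symmetric])
  qed
  have m1: "(\<Sum>k\<le>n. W i n k * real k) = real n * q" unfolding W_def q_def by (rule bw_mean)
  have m2: "(\<Sum>k\<le>n. W i n k * (real n - real k)) = real n * r"
  proof -
    have "(\<Sum>k\<le>n. W i n k * (real n - real k)) = real n * (\<Sum>k\<le>n. W i n k) - (\<Sum>k\<le>n. W i n k * real k)"
      by (simp add: algebra_simps sum_subtractf sum_distrib_left)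
    then show ?thesis unfolding W_sum m1 rq by (simp add: algebra_simps)
  qed
  have "Wf i n - (\<Sum>k\<le>n. W i n k * (Wf 0 k + Wf 1 (n - k)))
      = sig * (xlogx (real n) - Ex1) + real n * (dd i - dd 0 * q - dd 1 * r)"
    unfolding sumWf m1 m2 unfolding Wf_def by (simp add: algebra_simps)
  also have "\<dots> = al i * real n - sig * \<rho>"
    unfolding dd_eq[OF i, folded q_def r_def] \<rho>_def using ent by (simp add: algebra_simps)
  finally show ?thesis using rho by blast
qed

end


context chain begin

lemma var_rec:
  fixes s :: "nat \<Rightarrow> nat \<Rightarrow> real"
  assumes i: "i \<in> {0,1}" and n: "2 \<le> n"
    and srec: "s i n = (\<Sum>k\<le>n. W i n k * (s 0 k + s 1 (n - k) + (eta1 p i n)^2 + 2 * (F 0 k * F 1 (n - k)) + 2 * eta1 p i n * (F 0 k + F 1 (n - k))))"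
  shows "(s i n - (F i n)^2) - (\<Sum>k\<le>n. W i n k * ((s 0 k - (F 0 k)^2) + (s 1 (n - k) - (F 1 (n - k))^2))) = T i n"
proof -
  define \<eta> where "\<eta> = eta1 p i n"
  have a: "s i n - (\<Sum>k\<le>n. W i n k * ((s 0 k - (F 0 k)^2) + (s 1 (n - k) - (F 1 (n - k))^2))) = (\<Sum>k\<le>n. W i n k * (fsum n k + \<eta>)^2)"
  proof -
    have "s i n - (\<Sum>k\<le>n. W i n k * ((s 0 k - (F 0 k)^2) + (s 1 (n - k) - (F 1 (n - k))^2)))
      = (\<Sum>k\<le>n. W i n k * (s 0 k + s 1 (n - k) + \<eta>^2 + 2 * (F 0 k * F 1 (n - k)) + 2 * \<eta> * (F 0 k + F 1 (n - k))) - W i n k * ((s 0 k - (F 0 k)^2) + (s 1 (n - k) - (F 1 (n - k))^2)))"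
      unfolding srec \<eta>_def by (simp add: sum_subtractf)
    also have "\<dots> = (\<Sum>k\<le>n. W i n k * (fsum n k + \<eta>)^2)"
      by (rule sum.cong) (simp_all add: fsum_def power2_eq_square algebra_simps)
    finally show ?thesis .
  qed
  have b: "F i n = (\<Sum>k\<le>n. W i n k * (fsum n k + \<eta>))"
    using F_rec[OF i n] unfolding fsum_def \<eta>_def by simp
  have "(s i n - (F i n)^2) - (\<Sum>k\<le>n. W i n k * ((s 0 k - (F 0 k)^2) + (s 1 (n - k) - (F 1 (n - k))^2)))
     = (\<Sum>k\<le>n. W i n k * (fsum n k + \<eta>)^2) - (\<Sum>k\<le>n. W i n k * (fsum n k + \<eta>))^2"
    using a b by simp
  also have "\<dots> = T i n" unfolding T_def by (rule wvar_shift[OF W_sum])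
  finally show ?thesis .
qed

lemma sqrt_sum_ge: "1 < sqrt q + sqrt (1 - q)" if "0 < q" "q < 1" for q :: real
proof -
  have "(sqrt q + sqrt (1 - q))^2 = 1 + 2 * sqrt q * sqrt (1 - q)"
    using that by (simp add: power2_eq_square algebra_simps)
  moreover have "0 < sqrt q * sqrt (1 - q)" using that by simp
  ultimately have "1^2 < (sqrt q + sqrt (1 - q))^2" by simp
  then show ?thesis by (rule power_less_imp_less_base) (use that in simp)
qed

theorem var_main:
  fixes s :: "nat \<Rightarrow> nat \<Rightarrow> real"
  assumes sbase: "\<And>j k. j \<in> {0,1} \<Longrightarrow> k \<le> 1 \<Longrightarrow> s j k = 0"
    and srec: "\<And>i n. i \<in> {0,1} \<Longrightarrow> 2 \<le> n \<Longrightarrow> s i n = (\<Sum>k\<le>n. W i n k * (s 0 k + s 1 (n - k) + (eta1 p i n)^2 + 2 * (F 0 k * F 1 (n - k)) + 2 * eta1 p i n * (F 0 k + F 1 (n - k))))"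
  shows "\<exists>A. \<forall>j\<in>{0,1}. \<forall>n. \<bar>s j n - (F j n)^2 - sig * real n * ln (real n)\<bar> \<le> A * real n"
proof -
  define v where "v j k = s j k - (F j k)^2" for j k
  define u where "u j k = v j k - Wf j k" for j k
  define Ci where "Ci i = al i + 2 * Krho i + sig" for i
  define Cc where "Cc = max (Ci 0) (Ci 1) + 1"
  have Ci: "i \<in> {0,1} \<Longrightarrow> Ci i \<le> Cc" for i unfolding Cc_def by auto
  have Cc: "1 \<le> Cc" unfolding Cc_def Ci_def using al_nonneg[of 0] Krho_nonneg[of 0] sig_nonneg by simp
  define \<gamma> where "\<gamma> i = sqrt (p i 0) + sqrt (1 - p i 0) - 1" for i
  define \<delta> where "\<delta> i = (1 - p i 0) / (2 * sqrt (p i 0)) + p i 0 / (2 * sqrt (1 - p i 0))" for i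
  define G where "G = min (\<gamma> 0) (\<gamma> 1)"
  define Dl where "Dl = max (\<delta> 0) (\<delta> 1)"
  have \<gamma>: "i \<in> {0,1} \<Longrightarrow> 0 < \<gamma> i" for i unfolding \<gamma>_def using sqrt_sum_ge[of "p i 0"] q0 q1 by auto
  have G: "0 < G" "\<And>i. i \<in> {0,1} \<Longrightarrow> G \<le> \<gamma> i" unfolding G_def using \<gamma> by auto
  have \<delta>: "\<And>i. i \<in> {0,1} \<Longrightarrow> \<delta> i \<le> Dl" unfolding Dl_def by auto
  have \<delta>0: "0 \<le> \<delta> i" if i: "i \<in> {0,1}" for i unfolding \<delta>_def using q0[OF i] q1[OF i] by (auto intro!: add_nonneg_nonneg divide_nonneg_pos)
  have Dl0: "0 \<le> Dl" using \<delta>0[of 0] \<delta>[of 0] by simp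
  define B where "B = 2 * Cc / G"
  have B: "0 < B" unfolding B_def using Cc G by simp
  define Nst where "Nst = max 2 (nat \<lceil>(2 * Dl / G)^2\<rceil>)"
  have Nst2: "2 \<le> Nst" unfolding Nst_def by simp
  define K0 where "K0 = (\<Sum>k<Nst. \<bar>u 0 k\<bar> + \<bar>u 1 k\<bar>)"
  define A where "A = B + K0"
  define \<phi> where "\<phi> k = A * real k - B * sqrt (real k)" for k
  have u0: "j \<in> {0,1} \<Longrightarrow> u j 0 = 0" for j unfolding u_def v_def Wf_def using sbase F_small by simp
  have resid: "\<bar>u i n - (\<Sum>k\<le>n. W i n k * (u 0 k + u 1 (n - k)))\<bar> \<le> Cc * sqrt (real n)" if i: "i \<in> {0,1}" and n: "2 \<le> n" for i n
  proof -
    have n1: "1 \<le> n" using n by simp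
    obtain \<rho> where rho: "0 \<le> \<rho>" "\<rho> \<le> 1" and wr: "Wf i n - (\<Sum>k\<le>n. W i n k * (Wf 0 k + Wf 1 (n - k))) = al i * real n - sig * \<rho>"
      using Wf_resid[OF i n1] by blast
    have vr: "v i n - (\<Sum>k\<le>n. W i n k * (v 0 k + v 1 (n - k))) = T i n"
      unfolding v_def by (rule var_rec[OF i n srec[OF i n]])
    have "u i n - (\<Sum>k\<le>n. W i n k * (u 0 k + u 1 (n - k)))
        = (v i n - (\<Sum>k\<le>n. W i n k * (v 0 k + v 1 (n - k)))) - (Wf i n - (\<Sum>k\<le>n. W i n k * (Wf 0 k + Wf 1 (n - k))))"
      unfolding u_def by (simp add: sum_subtractf algebra_simps)
    also have "\<dots> = (T i n - al i * real n) + sig * \<rho>" unfolding vr wr by simp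
    finally have e: "u i n - (\<Sum>k\<le>n. W i n k * (u 0 k + u 1 (n - k))) = (T i n - al i * real n) + sig * \<rho>" .
    have tb: "\<bar>T i n - al i * real n\<bar> \<le> (al i + 2 * Krho i) * sqrt (real n)" by (rule T_bound[OF i n1])
    have sq: "1 \<le> sqrt (real n)" using n1 by simp
    have "\<rho> \<le> sqrt (real n)" using rho sq by linarith
    then have "sig * \<rho> \<le> sig * sqrt (real n)" using sig_nonneg by (intro mult_left_mono) auto
    moreover have "0 \<le> sig * \<rho>" using rho sig_nonneg by simp
    ultimately have "\<bar>u i n - (\<Sum>k\<le>n. W i n k * (u 0 k + u 1 (n - k)))\<bar> \<le> Ci i * sqrt (real n)"
      unfolding e Ci_def using tb by (simp add: algebra_simps abs_le_iff)
    also have "\<dots> \<le> Cc * sqrt (real n)" using Ci[OF i] by (intro mult_right_mono) auto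
    finally show ?thesis .
  qed
  have sup: "(\<Sum>k\<le>n. W i n k * (\<phi> k + \<phi> (n - k))) + Cc * sqrt (real n) \<le> \<phi> n" if i: "i \<in> {0,1}" and n: "Nst \<le> n" for i n
  proof -
    define q where "q = p i 0"
    have q: "0 < q" "q < 1" using q0[OF i] q1[OF i] by (auto simp: q_def)
    have n1: "0 < n" using n Nst2 by simp
    have sq: "1 \<le> sqrt (real n)" using n1 by simp
    have sumphi: "(\<Sum>k\<le>n. W i n k * (\<phi> k + \<phi> (n - k))) = A * real n - B * (\<Sum>k\<le>n. W i n k * (sqrt (real k) + sqrt (real n - real k)))"
    proof -
      have "(\<Sum>k\<le>n. W i n k * (\<phi> k + \<phi> (n - k))) = (\<Sum>k\<le>n. A * real n * W i n k - B * (W i n k * (sqrt (real k) + sqrt (real n - real k))))"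
        by (rule sum.cong) (auto simp: \<phi>_def of_nat_diff algebra_simps)
      also have "\<dots> = A * real n * (\<Sum>k\<le>n. W i n k) - B * (\<Sum>k\<le>n. W i n k * (sqrt (real k) + sqrt (real n - real k)))"
        by (simp add: sum_subtractf sum_distrib_left)
      finally show ?thesis by (simp add: W_sum)
    qed
    have lb: "sqrt (real n) * (sqrt q + sqrt (1 - q)) - ((1 - q) / (2 * sqrt (real n * q)) + q / (2 * sqrt (real n * (1 - q))))
       \<le> (\<Sum>k\<le>n. W i n k * (sqrt (real k) + sqrt (real n - real k)))"
      unfolding W_def q_def[symmetric] by (rule bw_sqrt_bound[OF q n1])
    have dl: "(1 - q) / (2 * sqrt (real n * q)) + q / (2 * sqrt (real n * (1 - q))) \<le> \<delta> i"
    proof -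
      have "(1 - q) / (2 * sqrt (real n * q)) \<le> (1 - q) / (2 * sqrt q)"
        using q n1 by (intro divide_left_mono mult_left_mono real_sqrt_le_mono) (auto simp: real_sqrt_mult)
      moreover have "q / (2 * sqrt (real n * (1 - q))) \<le> q / (2 * sqrt (1 - q))"
        using q n1 by (intro divide_left_mono mult_left_mono real_sqrt_le_mono) (auto simp: real_sqrt_mult)
      ultimately show ?thesis unfolding \<delta>_def q_def by simp
    qed
    have gd: "sqrt (real n) * (sqrt q + sqrt (1 - q)) = sqrt (real n) + sqrt (real n) * \<gamma> i"
      unfolding \<gamma>_def q_def by (simp add: algebra_simps)
    have key: "Cc * sqrt (real n) + B * \<delta> i \<le> B * (sqrt (real n) * \<gamma> i)"
    proof -
      have sn: "2 * Dl / G \<le> sqrt (real n)"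
      proof -
        have "(2 * Dl / G)^2 \<le> real Nst" unfolding Nst_def by linarith
        also have "\<dots> \<le> real n" using n by simp
        finally have "(2 * Dl / G)^2 \<le> real n" .
        then have "sqrt ((2 * Dl / G)^2) \<le> sqrt (real n)" by (rule real_sqrt_le_mono)
        then show ?thesis using Dl0 G by simp
      qed
      have "B * \<delta> i \<le> B * Dl" using B \<delta>[OF i] by simp
      also have "B * Dl = Cc * (2 * Dl / G)" unfolding B_def by simp
      also have "\<dots> \<le> Cc * sqrt (real n)" using sn Cc by (intro mult_left_mono) auto
      finally have h1: "B * \<delta> i \<le> Cc * sqrt (real n)" .
      have "B * (sqrt (real n) * G) = 2 * Cc * sqrt (real n)" unfolding B_def using G by simp
      moreover have "B * (sqrt (real n) * G) \<le> B * (sqrt (real n) * \<gamma> i)"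
        using B G(2)[OF i] sq by (intro mult_left_mono) auto
      ultimately show ?thesis using h1 by linarith
    qed
    have "(\<Sum>k\<le>n. W i n k * (\<phi> k + \<phi> (n - k))) + Cc * sqrt (real n)
        \<le> A * real n - B * (sqrt (real n) * (sqrt q + sqrt (1 - q)) - \<delta> i) + Cc * sqrt (real n)"
    proof -
      have "sqrt (real n) * (sqrt q + sqrt (1 - q)) - \<delta> i \<le> (\<Sum>k\<le>n. W i n k * (sqrt (real k) + sqrt (real n - real k)))"
        using lb dl by linarith
      then show ?thesis unfolding sumphi using B by (simp add: mult_left_mono)
    qed
    also have "\<dots> \<le> \<phi> n" unfolding \<phi>_def gd using key by (simp add: algebra_simps)
    finally show ?thesis .
  qed
  have base: "\<bar>u i k\<bar> \<le> \<phi> k" if i: "i \<in> {0,1}" and k: "k < Nst" for i k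
  proof (cases "k = 0")
    case True
    then show ?thesis using u0[OF i] by (simp add: \<phi>_def)
  next
    case False
    then have k1: "1 \<le> real k" by simp
    have "\<bar>u i k\<bar> \<le> \<bar>u 0 k\<bar> + \<bar>u 1 k\<bar>" using i by auto
    also have "\<dots> \<le> K0" unfolding K0_def using k
      by (intro member_le_sum[of k "{..<Nst}" "\<lambda>k. \<bar>u 0 k\<bar> + \<bar>u 1 k\<bar>"]) auto
    also have "K0 \<le> K0 * real k"
    proof -
      have "0 \<le> K0" unfolding K0_def by (intro sum_nonneg) auto
      then have "K0 * 1 \<le> K0 * real k" using k1 by (intro mult_left_mono) auto
      then show ?thesis by simp
    qed
    also have "\<dots> \<le> \<phi> k"
    proof -
      have s1: "1 \<le> sqrt (real k)" using k1 by simp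
      then have "sqrt (real k) * 1 \<le> sqrt (real k) * sqrt (real k)" by (intro mult_left_mono) auto
      then have "sqrt (real k) \<le> real k" by simp
      then have "B * sqrt (real k) \<le> B * real k" using B by simp
      then show ?thesis unfolding \<phi>_def A_def by (simp add: algebra_simps)
    qed
    finally show ?thesis .
  qed
  have bound: "\<forall>i\<in>{0,1}. \<bar>u i n\<bar> \<le> \<phi> n" for n
    by (rule compare_rec[where u=u and \<phi>=\<phi> and W=W and e="\<lambda>n. Cc * sqrt (real n)" and Nst=Nst])
      (use Nst2 W_nonneg W_lt resid sup base in \<open>auto\<close>)
  define Af where "Af = A + \<bar>dd 0\<bar> + \<bar>dd 1\<bar>"
  have "\<bar>s j n - (F j n)^2 - sig * real n * ln (real n)\<bar> \<le> Af * real n" if j: "j \<in> {0,1}" for j n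
  proof -
    have xl: "sig * xlogx (real n) = sig * real n * ln (real n)"
      by (cases "n = 0") (auto simp: xlogx_def)
    have e: "s j n - (F j n)^2 - sig * real n * ln (real n) = u j n + dd j * real n"
      unfolding u_def v_def Wf_def xl[symmetric] by simp
    have "\<bar>u j n\<bar> \<le> A * real n"
    proof -
      have "\<bar>u j n\<bar> \<le> \<phi> n" using bound j by blast
      also have "\<phi> n \<le> A * real n" unfolding \<phi>_def using B by simp
      finally show ?thesis .
    qed
    moreover have "\<bar>dd j * real n\<bar> \<le> (\<bar>dd 0\<bar> + \<bar>dd 1\<bar>) * real n"
      using j by (auto simp: abs_mult intro!: mult_right_mono)
    ultimately show ?thesis unfolding e Af_def by (simp add: algebra_simps)
  qed
  then show ?thesis by blast
qed

end


lemma mixture_nn: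
  fixes \<mu> :: "'b measure" and Q :: "nat \<Rightarrow> 'b measure" and Pm :: "nat pmf" and Bm :: "'b measure"
  assumes sP: "set_pmf Pm = {..n}"
    and Qp: "\<And>k. prob_space (Q k)" and Qs: "\<And>k. sets (Q k) = sets Bm"
    and s\<mu>: "sets \<mu> = sets Bm" and fin: "finite_measure \<mu>"
    and eq: "\<And>A. A \<in> sets Bm \<Longrightarrow> measure \<mu> A = (\<Sum>k\<le>n. pmf Pm k * measure (Q k) A)"
    and g: "g \<in> borel_measurable Bm"
  shows "(\<integral>\<^sup>+x. g x \<partial>\<mu>) = (\<Sum>k\<le>n. (\<integral>\<^sup>+x. g x \<partial>Q k) * ennreal (pmf Pm k))"
proof -
  define N where "N = measure_pmf Pm \<bind> Q"
  have Qm: "Q \<in> measurable (measure_pmf Pm) (subprob_algebra Bm)"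
    using Qp Qs by (simp add: space_subprob_algebra prob_space_imp_subprob_space)
  have sp: "space (measure_pmf Pm) \<noteq> {}" by simp
  have sN: "sets N = sets Bm" unfolding N_def by (rule sets_bind) (use Qs in auto)
  have "\<mu> = N"
  proof (rule measure_eqI)
    show "sets \<mu> = sets N" using s\<mu> sN by simp
    fix A assume A: "A \<in> sets \<mu>"
    then have A': "A \<in> sets Bm" using s\<mu> by simp
    have "emeasure N A = (\<integral>\<^sup>+k. emeasure (Q k) A \<partial>measure_pmf Pm)"
      unfolding N_def by (rule emeasure_bind[OF sp Qm A'])
    also have "\<dots> = (\<Sum>k\<in>set_pmf Pm. emeasure (Q k) A * pmf Pm k)"
      by (rule nn_integral_measure_pmf_finite) (auto simp: sP)
    also have "\<dots> = (\<Sum>k\<le>n. ennreal (pmf Pm k * measure (Q k) A))"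
    proof (unfold sP, rule sum.cong[OF refl])
      fix k
      interpret prob_space "Q k" by (rule Qp)
      show "emeasure (Q k) A * ennreal (pmf Pm k) = ennreal (pmf Pm k * measure (Q k) A)"
        by (simp add: emeasure_eq_measure ennreal_mult mult.commute)
    qed
    also have "\<dots> = ennreal (\<Sum>k\<le>n. pmf Pm k * measure (Q k) A)" by (rule sum_ennreal) simp
    also have "\<dots> = emeasure \<mu> A"
      using eq[OF A'] fin by (simp add: finite_measure.emeasure_eq_measure)
    finally show "emeasure \<mu> A = emeasure N A" by simp
  qed
  then have "(\<integral>\<^sup>+x. g x \<partial>\<mu>) = (\<integral>\<^sup>+k. (\<integral>\<^sup>+x. g x \<partial>Q k) \<partial>measure_pmf Pm)"
    unfolding N_def by (simp add: nn_integral_bind[OF g Qm])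
  also have "\<dots> = (\<Sum>k\<in>set_pmf Pm. (\<integral>\<^sup>+x. g x \<partial>Q k) * pmf Pm k)"
    by (rule nn_integral_measure_pmf_finite) (auto simp: sP)
  finally show ?thesis unfolding sP .
qed

lemma enn2real_wsum:
  fixes a :: "nat \<Rightarrow> ennreal" and w :: "nat \<Rightarrow> real"
  assumes "\<And>k. k \<le> n \<Longrightarrow> a k < top" "\<And>k. 0 \<le> w k"
  shows "enn2real (\<Sum>k\<le>n. a k * ennreal (w k)) = (\<Sum>k\<le>n. w k * enn2real (a k))"
proof -
  have "enn2real (\<Sum>k\<le>n. a k * ennreal (w k)) = (\<Sum>k\<le>n. enn2real (a k * ennreal (w k)))"
    using assms by (subst enn2real_sum) (auto simp: ennreal_mult_less_top)
  also have "\<dots> = (\<Sum>k\<le>n. w k * enn2real (a k))"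
    using assms by (intro sum.cong) (auto simp: enn2real_mult)
  finally show ?thesis .
qed

lemma mixture_integral:
  fixes \<mu> :: "'b measure" and Q :: "nat \<Rightarrow> 'b measure" and Pm :: "nat pmf" and Bm :: "'b measure"
    and h :: "'b \<Rightarrow> real"
  assumes sP: "set_pmf Pm = {..n}"
    and Qp: "\<And>k. prob_space (Q k)" and Qs: "\<And>k. sets (Q k) = sets Bm"
    and s\<mu>: "sets \<mu> = sets Bm" and fin: "finite_measure \<mu>"
    and eq: "\<And>A. A \<in> sets Bm \<Longrightarrow> measure \<mu> A = (\<Sum>k\<le>n. pmf Pm k * measure (Q k) A)"
    and h: "h \<in> borel_measurable Bm" and hi: "\<And>k. k \<le> n \<Longrightarrow> integrable (Q k) h"
  shows "integrable \<mu> h" "integral\<^sup>L \<mu> h = (\<Sum>k\<le>n. pmf Pm k * integral\<^sup>L (Q k) h)"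
proof -
  note mix = mixture_nn[OF sP Qp Qs s\<mu> fin eq]
  have m1: "(\<lambda>x. ennreal (norm (h x))) \<in> borel_measurable Bm"
    by (rule measurable_compose[OF measurable_compose[OF h borel_measurable_norm] measurable_ennreal])
  have m2: "(\<lambda>x. ennreal (h x)) \<in> borel_measurable Bm"
    by (rule measurable_compose[OF h measurable_ennreal])
  have m3: "(\<lambda>x. ennreal (- h x)) \<in> borel_measurable Bm"
    by (rule measurable_compose[OF borel_measurable_uminus[OF h] measurable_ennreal])
  have hm: "h \<in> borel_measurable \<mu>" by (subst measurable_cong_sets[OF s\<mu> refl]) (rule h)
  have fQ: "(\<integral>\<^sup>+x. ennreal (norm (h x)) \<partial>Q k) < top" if "k \<le> n" for k
    using hi[OF that] unfolding integrable_iff_bounded by simp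
  have "(\<integral>\<^sup>+x. ennreal (norm (h x)) \<partial>\<mu>) = (\<Sum>k\<le>n. (\<integral>\<^sup>+x. ennreal (norm (h x)) \<partial>Q k) * ennreal (pmf Pm k))"
    by (rule mix) (use m1 m2 m3 in auto)
  also have "\<dots> < top" using fQ by (simp add: ennreal_mult_less_top)
  finally show hint: "integrable \<mu> h" unfolding integrable_iff_bounded using hm by simp
  have pos: "(\<integral>\<^sup>+x. ennreal (h x) \<partial>\<mu>) = (\<Sum>k\<le>n. (\<integral>\<^sup>+x. ennreal (h x) \<partial>Q k) * ennreal (pmf Pm k))"
    by (rule mix) (use m1 m2 m3 in auto)
  have neg: "(\<integral>\<^sup>+x. ennreal (- h x) \<partial>\<mu>) = (\<Sum>k\<le>n. (\<integral>\<^sup>+x. ennreal (- h x) \<partial>Q k) * ennreal (pmf Pm k))"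
    by (rule mix) (use m1 m2 m3 in auto)
  have fp: "(\<integral>\<^sup>+x. ennreal (h x) \<partial>Q k) < top" if "k \<le> n" for k
  proof -
    have "(\<integral>\<^sup>+x. ennreal (h x) \<partial>Q k) \<le> (\<integral>\<^sup>+x. ennreal (norm (h x)) \<partial>Q k)"
      by (intro nn_integral_mono) (simp add: ennreal_leI)
    then show ?thesis using fQ[OF that] by (simp add: le_less_trans)
  qed
  have fn: "(\<integral>\<^sup>+x. ennreal (- h x) \<partial>Q k) < top" if "k \<le> n" for k
  proof -
    have "(\<integral>\<^sup>+x. ennreal (- h x) \<partial>Q k) \<le> (\<integral>\<^sup>+x. ennreal (norm (h x)) \<partial>Q k)"
      by (intro nn_integral_mono) (simp add: ennreal_leI)
    then show ?thesis using fQ[OF that] by (simp add: le_less_trans)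
  qed
  have P: "enn2real (\<integral>\<^sup>+x. ennreal (h x) \<partial>\<mu>) = (\<Sum>k\<le>n. pmf Pm k * enn2real (\<integral>\<^sup>+x. ennreal (h x) \<partial>Q k))"
    unfolding pos by (rule enn2real_wsum[OF fp pmf_nonneg])
  have Nn: "enn2real (\<integral>\<^sup>+x. ennreal (- h x) \<partial>\<mu>) = (\<Sum>k\<le>n. pmf Pm k * enn2real (\<integral>\<^sup>+x. ennreal (- h x) \<partial>Q k))"
    unfolding neg by (rule enn2real_wsum[OF fn pmf_nonneg])
  have "integral\<^sup>L \<mu> h = enn2real (\<integral>\<^sup>+x. ennreal (h x) \<partial>\<mu>) - enn2real (\<integral>\<^sup>+x. ennreal (- h x) \<partial>\<mu>)"
    by (rule real_lebesgue_integral_def[OF hint])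
  also have "\<dots> = (\<Sum>k\<le>n. pmf Pm k * (enn2real (\<integral>\<^sup>+x. ennreal (h x) \<partial>Q k) - enn2real (\<integral>\<^sup>+x. ennreal (- h x) \<partial>Q k)))"
    unfolding P Nn by (simp add: sum_subtractf algebra_simps)
  also have "\<dots> = (\<Sum>k\<le>n. pmf Pm k * integral\<^sup>L (Q k) h)"
    by (rule sum.cong[OF refl]) (simp add: real_lebesgue_integral_def[OF hi])
  finally show "integral\<^sup>L \<mu> h = (\<Sum>k\<le>n. pmf Pm k * integral\<^sup>L (Q k) h)" .
qed


lemma distr_pair_snd':
  assumes P0: "prob_space P0" and P1: "prob_space P1"
  shows "distr (P0 \<Otimes>\<^sub>M P1) P1 snd = P1"
proof -
  interpret pair_prob_space P0 P1
    by (simp add: P0 P1 pair_prob_space_def pair_sigma_finite_def prob_space_imp_sigma_finite)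
  show ?thesis
  proof (intro measure_eqI)
    fix A assume A: "A \<in> sets (distr (P0 \<Otimes>\<^sub>M P1) P1 snd)"
    then have A': "A \<in> sets P1" by simp
    have "emeasure (distr (P0 \<Otimes>\<^sub>M P1) P1 snd) A = emeasure (P0 \<Otimes>\<^sub>M P1) (space P0 \<times> A)"
      using A' by (auto simp add: emeasure_distr space_pair_measure dest: sets.sets_into_space intro!: arg_cong2[where f=emeasure])
    also have "\<dots> = emeasure P0 (space P0) * emeasure P1 A"
      using A' by (intro M2.emeasure_pair_measure_Times) auto
    finally show "emeasure (distr (P0 \<Otimes>\<^sub>M P1) P1 snd) A = emeasure P1 A"
      using M1.emeasure_space_1 by simp
  qed simp
qed

lemma pair_fst:
  fixes g :: "'a \<Rightarrow> real"
  assumes P0: "prob_space P0" and P1: "prob_space P1" and g: "g \<in> borel_measurable P0"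
  shows "integrable (P0 \<Otimes>\<^sub>M P1) (\<lambda>z. g (fst z)) \<longleftrightarrow> integrable P0 g"
    "integral\<^sup>L (P0 \<Otimes>\<^sub>M P1) (\<lambda>z. g (fst z)) = integral\<^sup>L P0 g"
proof -
  have d: "distr (P0 \<Otimes>\<^sub>M P1) P0 fst = P0" by (rule prob_space.distr_pair_fst[OF P1])
  have m: "fst \<in> (P0 \<Otimes>\<^sub>M P1) \<rightarrow>\<^sub>M P0" by simp
  show "integrable (P0 \<Otimes>\<^sub>M P1) (\<lambda>z. g (fst z)) \<longleftrightarrow> integrable P0 g"
    using integrable_distr_eq[OF m g] d by simp
  show "integral\<^sup>L (P0 \<Otimes>\<^sub>M P1) (\<lambda>z. g (fst z)) = integral\<^sup>L P0 g"
    using integral_distr[OF m g] d by simp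
qed

lemma pair_snd:
  fixes g :: "'b \<Rightarrow> real"
  assumes P0: "prob_space P0" and P1: "prob_space P1" and g: "g \<in> borel_measurable P1"
  shows "integrable (P0 \<Otimes>\<^sub>M P1) (\<lambda>z. g (snd z)) \<longleftrightarrow> integrable P1 g"
    "integral\<^sup>L (P0 \<Otimes>\<^sub>M P1) (\<lambda>z. g (snd z)) = integral\<^sup>L P1 g"
proof -
  have d: "distr (P0 \<Otimes>\<^sub>M P1) P1 snd = P1" by (rule distr_pair_snd'[OF P0 P1])
  have m: "snd \<in> (P0 \<Otimes>\<^sub>M P1) \<rightarrow>\<^sub>M P1" by simp
  show "integrable (P0 \<Otimes>\<^sub>M P1) (\<lambda>z. g (snd z)) \<longleftrightarrow> integrable P1 g"
    using integrable_distr_eq[OF m g] d by simp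
  show "integral\<^sup>L (P0 \<Otimes>\<^sub>M P1) (\<lambda>z. g (snd z)) = integral\<^sup>L P1 g"
    using integral_distr[OF m g] d by simp
qed

lemma pair_cross:
  fixes f :: "'a \<Rightarrow> real" and g :: "'b \<Rightarrow> real"
  assumes P0: "prob_space P0" and P1: "prob_space P1"
    and f: "integrable P0 f" and g: "integrable P1 g"
  shows "integrable (P0 \<Otimes>\<^sub>M P1) (\<lambda>z. f (fst z) * g (snd z))"
    "integral\<^sup>L (P0 \<Otimes>\<^sub>M P1) (\<lambda>z. f (fst z) * g (snd z)) = integral\<^sup>L P0 f * integral\<^sup>L P1 g"
proof -
  interpret pair_prob_space P0 P1
    by (simp add: P0 P1 pair_prob_space_def pair_sigma_finite_def prob_space_imp_sigma_finite)
  have fm[measurable]: "f \<in> borel_measurable P0" using f by auto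
  have gm[measurable]: "g \<in> borel_measurable P1" using g by auto
  show int: "integrable (P0 \<Otimes>\<^sub>M P1) (\<lambda>z. f (fst z) * g (snd z))"
  proof (rule Fubini_integrable)
    show "(\<lambda>z. f (fst z) * g (snd z)) \<in> borel_measurable (P0 \<Otimes>\<^sub>M P1)" by measurable
    have "integrable P0 (\<lambda>x. \<bar>f x\<bar> * (\<integral>y. \<bar>g y\<bar> \<partial>P1))"
      using f by (intro integrable_mult_left integrable_abs)
    then show "integrable P0 (\<lambda>x. \<integral>y. norm (f (fst (x, y)) * g (snd (x, y))) \<partial>P1)"
      by (simp add: abs_mult)
    show "AE x in P0. integrable P1 (\<lambda>y. f (fst (x, y)) * g (snd (x, y)))"
      using g by (intro AE_I2) simp
  qed
  have "(\<integral>x. (\<integral>y. f x * g y \<partial>P1) \<partial>P0) = integral\<^sup>L (P0 \<Otimes>\<^sub>M P1) (\<lambda>(x, y). f x * g y)"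
    by (rule integral_fst) (use int in \<open>simp add: case_prod_beta'\<close>)
  moreover have "(\<integral>x. (\<integral>y. f x * g y \<partial>P1) \<partial>P0) = integral\<^sup>L P0 f * integral\<^sup>L P1 g"
    by simp
  moreover have "(\<lambda>(x, y). f x * g y) = (\<lambda>z. f (fst z) * g (snd z))" by auto
  ultimately show "integral\<^sup>L (P0 \<Otimes>\<^sub>M P1) (\<lambda>z. f (fst z) * g (snd z)) = integral\<^sup>L P0 f * integral\<^sup>L P1 g"
    by simp
qed


lemma prod_moments:
  fixes P0 P1 :: "(real \<times> real) measure" and e1 e2 :: real
  assumes P0: "prob_space P0" and P1: "prob_space P1"
    and s0: "sets P0 = sets borel" and s1: "sets P1 = sets borel"
    and i0: "integrable P0 (\<lambda>x. (fst x)\<^sup>2)" and i1: "integrable P1 (\<lambda>x. (fst x)\<^sup>2)"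
  defines "Q \<equiv> distr (P0 \<Otimes>\<^sub>M P1) borel (\<lambda>((a, b), (c, d)). (a + c + e1, b + d + e2))"
  shows "prob_space Q" "sets Q = sets borel" "integrable Q fst" "integrable Q (\<lambda>x. (fst x)\<^sup>2)"
    "integral\<^sup>L Q fst = integral\<^sup>L P0 fst + integral\<^sup>L P1 fst + e1"
    "integral\<^sup>L Q (\<lambda>x. (fst x)\<^sup>2) = integral\<^sup>L P0 (\<lambda>x. (fst x)\<^sup>2) + integral\<^sup>L P1 (\<lambda>x. (fst x)\<^sup>2) + e1\<^sup>2
       + 2 * (integral\<^sup>L P0 fst * integral\<^sup>L P1 fst) + 2 * e1 * (integral\<^sup>L P0 fst + integral\<^sup>L P1 fst)"
proof -
  interpret pp: pair_prob_space P0 P1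
    by (simp add: P0 P1 pair_prob_space_def pair_sigma_finite_def prob_space_imp_sigma_finite)
  define G :: "(real \<times> real) \<times> (real \<times> real) \<Rightarrow> real \<times> real" where
    "G = (\<lambda>((a, b), (c, d)). (a + c + e1, b + d + e2))"
  have Gfst: "fst (G z) = fst (fst z) + fst (snd z) + e1" for z
    by (cases z) (auto simp: G_def split: prod.split)
  have sP: "sets (P0 \<Otimes>\<^sub>M P1) = sets (borel \<Otimes>\<^sub>M borel)" by (rule sets_pair_measure_cong[OF s0 s1])
  have Geq: "G = (\<lambda>z. (fst (fst z) + fst (snd z) + e1, snd (fst z) + snd (snd z) + e2))"
    by (auto simp: G_def split: prod.split)
  have Gb: "G \<in> borel_measurable borel" unfolding Geq
    by (intro borel_measurable_continuous_onI continuous_intros)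
  have Gm: "G \<in> (P0 \<Otimes>\<^sub>M P1) \<rightarrow>\<^sub>M borel"
    unfolding measurable_cong_sets[OF sP refl] borel_prod using Gb .
  have hm: "fst \<in> borel_measurable (borel :: (real \<times> real) measure)"
    by (intro borel_measurable_continuous_onI continuous_intros)
  have hm2: "(\<lambda>x. (fst x)\<^sup>2) \<in> borel_measurable (borel :: (real \<times> real) measure)"
    by (intro borel_measurable_continuous_onI continuous_intros)
  have fm0: "fst \<in> borel_measurable P0" unfolding measurable_cong_sets[OF s0 refl] by (rule hm)
  have fm1: "fst \<in> borel_measurable P1" unfolding measurable_cong_sets[OF s1 refl] by (rule hm)
  have f2m0: "(\<lambda>x. (fst x)\<^sup>2) \<in> borel_measurable P0" unfolding measurable_cong_sets[OF s0 refl] by (rule hm2)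
  have f2m1: "(\<lambda>x. (fst x)\<^sup>2) \<in> borel_measurable P1" unfolding measurable_cong_sets[OF s1 refl] by (rule hm2)
  have if0: "integrable P0 fst"
    by (rule finite_measure.square_integrable_imp_integrable[OF prob_space.finite_measure[OF P0] fm0 i0])
  have if1: "integrable P1 fst"
    by (rule finite_measure.square_integrable_imp_integrable[OF prob_space.finite_measure[OF P1] fm1 i1])
  show "prob_space Q" unfolding Q_def G_def[symmetric] by (rule pp.prob_space_distr[OF Gm])
  show sQ: "sets Q = sets borel" unfolding Q_def by simp
  note a0 = pair_fst[OF P0 P1 fm0] and a1 = pair_snd[OF P0 P1 fm1]
  note b0 = pair_fst[OF P0 P1 f2m0] and b1 = pair_snd[OF P0 P1 f2m1]
  note cr = pair_cross[OF P0 P1 if0 if1]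
  have ia: "integrable (P0 \<Otimes>\<^sub>M P1) (\<lambda>z. fst (fst z))" using a0 if0 by simp
  have ic: "integrable (P0 \<Otimes>\<^sub>M P1) (\<lambda>z. fst (snd z))" using a1 if1 by simp
  have ia2: "integrable (P0 \<Otimes>\<^sub>M P1) (\<lambda>z. (fst (fst z))\<^sup>2)" using b0 i0 by simp
  have ic2: "integrable (P0 \<Otimes>\<^sub>M P1) (\<lambda>z. (fst (snd z))\<^sup>2)" using b1 i1 by simp
  have iac: "integrable (P0 \<Otimes>\<^sub>M P1) (\<lambda>z. fst (fst z) * fst (snd z))" using cr by simp
  have ie: "integrable (P0 \<Otimes>\<^sub>M P1) (\<lambda>z. c)" for c :: real by simp
  have lin: "(\<lambda>z. fst (G z)) = (\<lambda>z. fst (fst z) + fst (snd z) + e1)" using Gfst by auto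
  have sq: "(\<lambda>z. (fst (G z))\<^sup>2) = (\<lambda>z. (fst (fst z))\<^sup>2 + (fst (snd z))\<^sup>2 + e1\<^sup>2 + 2 * (fst (fst z) * fst (snd z)) + 2 * e1 * fst (fst z) + 2 * e1 * fst (snd z))"
    using Gfst by (auto simp: power2_eq_square algebra_simps)
  have int1: "integrable (P0 \<Otimes>\<^sub>M P1) (\<lambda>z. fst (G z))" unfolding lin
    by (intro Bochner_Integration.integrable_add ia ic ie)
  have int2: "integrable (P0 \<Otimes>\<^sub>M P1) (\<lambda>z. (fst (G z))\<^sup>2)" unfolding sq
    by (intro Bochner_Integration.integrable_add integrable_mult_right ia ic ia2 ic2 iac ie)
  show "integrable Q fst" unfolding Q_def G_def[symmetric] using integrable_distr_eq[OF Gm hm] int1 by simp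
  show "integrable Q (\<lambda>x. (fst x)\<^sup>2)" unfolding Q_def G_def[symmetric] using integrable_distr_eq[OF Gm hm2] int2 by simp
  have "integral\<^sup>L Q fst = integral\<^sup>L (P0 \<Otimes>\<^sub>M P1) (\<lambda>z. fst (G z))"
    unfolding Q_def G_def[symmetric] by (rule integral_distr[OF Gm hm])
  also have "\<dots> = integral\<^sup>L (P0 \<Otimes>\<^sub>M P1) (\<lambda>z. fst (fst z)) + integral\<^sup>L (P0 \<Otimes>\<^sub>M P1) (\<lambda>z. fst (snd z)) + e1"
    unfolding lin using ia ic by (simp add: pp.prob_space)
  also have "\<dots> = integral\<^sup>L P0 fst + integral\<^sup>L P1 fst + e1" using a0(2) a1(2) by simp
  finally show "integral\<^sup>L Q fst = integral\<^sup>L P0 fst + integral\<^sup>L P1 fst + e1" .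
  have "integral\<^sup>L Q (\<lambda>x. (fst x)\<^sup>2) = integral\<^sup>L (P0 \<Otimes>\<^sub>M P1) (\<lambda>z. (fst (G z))\<^sup>2)"
    unfolding Q_def G_def[symmetric] by (rule integral_distr[OF Gm hm2])
  also have "\<dots> = integral\<^sup>L (P0 \<Otimes>\<^sub>M P1) (\<lambda>z. (fst (fst z))\<^sup>2) + integral\<^sup>L (P0 \<Otimes>\<^sub>M P1) (\<lambda>z. (fst (snd z))\<^sup>2) + e1\<^sup>2
      + 2 * integral\<^sup>L (P0 \<Otimes>\<^sub>M P1) (\<lambda>z. fst (fst z) * fst (snd z)) + 2 * e1 * integral\<^sup>L (P0 \<Otimes>\<^sub>M P1) (\<lambda>z. fst (fst z))
      + 2 * e1 * integral\<^sup>L (P0 \<Otimes>\<^sub>M P1) (\<lambda>z. fst (snd z))"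
    unfolding sq using ia ic ia2 ic2 iac by (simp add: pp.prob_space)
  also have "\<dots> = integral\<^sup>L P0 (\<lambda>x. (fst x)\<^sup>2) + integral\<^sup>L P1 (\<lambda>x. (fst x)\<^sup>2) + e1\<^sup>2
       + 2 * (integral\<^sup>L P0 fst * integral\<^sup>L P1 fst) + 2 * e1 * (integral\<^sup>L P0 fst + integral\<^sup>L P1 fst)"
    using a0(2) a1(2) b0(2) b1(2) cr(2) by (simp add: algebra_simps)
  finally show "integral\<^sup>L Q (\<lambda>x. (fst x)\<^sup>2) = integral\<^sup>L P0 (\<lambda>x. (fst x)\<^sup>2) + integral\<^sup>L P1 (\<lambda>x. (fst x)\<^sup>2) + e1\<^sup>2
       + 2 * (integral\<^sup>L P0 fst * integral\<^sup>L P1 fst) + 2 * e1 * (integral\<^sup>L P0 fst + integral\<^sup>L P1 fst)" .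
qed


lemma rec_moments:
  fixes p :: "nat \<Rightarrow> nat \<Rightarrow> real" and M :: "'a measure" and X Z :: "nat \<Rightarrow> nat \<Rightarrow> 'a \<Rightarrow> real"
  assumes M: "prob_space M"
    and rvX: "\<And>j k. j \<in> {0,1} \<Longrightarrow> X j k \<in> borel_measurable M"
    and rvZ: "\<And>j k. j \<in> {0,1} \<Longrightarrow> Z j k \<in> borel_measurable M"
    and sqX: "\<And>j k. j \<in> {0,1} \<Longrightarrow> integrable M (\<lambda>\<omega>. (X j k \<omega>)\<^sup>2)"
    and i: "i \<in> {0,1}" and q: "0 < p i 0" "p i 0 < 1"
    and rec: "\<And>A. A \<in> sets (borel :: (real \<times> real) measure) \<Longrightarrow>
               measure M {\<omega> \<in> space M. (X i n \<omega>, Z i n \<omega>) \<in> A} = rhs_law p M X Z i n A"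
  shows "integral\<^sup>L M (X i n) = (\<Sum>k\<le>n. pmf (binomial_pmf n (p i 0)) k * (integral\<^sup>L M (X 0 k) + integral\<^sup>L M (X 1 (n - k)) + eta1 p i n))"
    "integral\<^sup>L M (\<lambda>\<omega>. (X i n \<omega>)\<^sup>2) = (\<Sum>k\<le>n. pmf (binomial_pmf n (p i 0)) k *
        (integral\<^sup>L M (\<lambda>\<omega>. (X 0 k \<omega>)\<^sup>2) + integral\<^sup>L M (\<lambda>\<omega>. (X 1 (n - k) \<omega>)\<^sup>2) + (eta1 p i n)\<^sup>2
         + 2 * (integral\<^sup>L M (X 0 k) * integral\<^sup>L M (X 1 (n - k))) + 2 * eta1 p i n * (integral\<^sup>L M (X 0 k) + integral\<^sup>L M (X 1 (n - k)))))"
proof -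
  interpret M: prob_space M by (rule M)
  define P where "P j k = pair_law M X Z j k" for j k
  have XZm: "(\<lambda>\<omega>. (X j k \<omega>, Z j k \<omega>)) \<in> borel_measurable M" if j: "j \<in> {0,1}" for j k
    using rvX[OF j] rvZ[OF j] by (rule borel_measurable_Pair)
  have Pp: "prob_space (P j k)" if j: "j \<in> {0,1}" for j k
    unfolding P_def pair_law_def by (rule M.prob_space_distr[OF XZm[OF j]])
  have Ps: "sets (P j k) = sets borel" for j k unfolding P_def pair_law_def by simp
  have hm: "fst \<in> borel_measurable (borel :: (real \<times> real) measure)"
    by (intro borel_measurable_continuous_onI continuous_intros)
  have hm2: "(\<lambda>x. (fst x)\<^sup>2) \<in> borel_measurable (borel :: (real \<times> real) measure)"
    by (intro borel_measurable_continuous_onI continuous_intros)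
  have Pi2: "integrable (P j k) (\<lambda>x. (fst x)\<^sup>2)" if j: "j \<in> {0,1}" for j k
    unfolding P_def pair_law_def using integrable_distr_eq[OF XZm[OF j] hm2] sqX[OF j] by simp
  have PE: "integral\<^sup>L (P j k) fst = integral\<^sup>L M (X j k)" if j: "j \<in> {0,1}" for j k
    unfolding P_def pair_law_def using integral_distr[OF XZm[OF j] hm] by simp
  have PE2: "integral\<^sup>L (P j k) (\<lambda>x. (fst x)\<^sup>2) = integral\<^sup>L M (\<lambda>\<omega>. (X j k \<omega>)\<^sup>2)" if j: "j \<in> {0,1}" for j k
    unfolding P_def pair_law_def using integral_distr[OF XZm[OF j] hm2] by simp
  define Q where "Q k = distr (P 0 k \<Otimes>\<^sub>M P 1 (n - k)) borel (\<lambda>((a, b), (c, d)). (a + c + eta1 p i n, b + d + eta2 p i n))" for k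
  have Pp0: "prob_space (P 0 k)" and Pp1: "prob_space (P 1 k)" for k using Pp by auto
  have Pi20: "integrable (P 0 k) (\<lambda>x. (fst x)\<^sup>2)" and Pi21: "integrable (P 1 k) (\<lambda>x. (fst x)\<^sup>2)" for k
    using Pi2 by auto
  have pmk: "prob_space (Q k) \<and> sets (Q k) = sets borel \<and> integrable (Q k) fst \<and> integrable (Q k) (\<lambda>x. (fst x)\<^sup>2)
    \<and> integral\<^sup>L (Q k) fst = integral\<^sup>L (P 0 k) fst + integral\<^sup>L (P 1 (n - k)) fst + eta1 p i n
    \<and> integral\<^sup>L (Q k) (\<lambda>x. (fst x)\<^sup>2) = integral\<^sup>L (P 0 k) (\<lambda>x. (fst x)\<^sup>2) + integral\<^sup>L (P 1 (n - k)) (\<lambda>x. (fst x)\<^sup>2) + (eta1 p i n)\<^sup>2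
       + 2 * (integral\<^sup>L (P 0 k) fst * integral\<^sup>L (P 1 (n - k)) fst) + 2 * eta1 p i n * (integral\<^sup>L (P 0 k) fst + integral\<^sup>L (P 1 (n - k)) fst)" for k
    using prod_moments[OF Pp0[of k] Pp1[of "n - k"] Ps Ps Pi20[of k] Pi21[of "n - k"], of "eta1 p i n" "eta2 p i n"]
    unfolding Q_def by blast
  have Qp: "prob_space (Q k)" for k using pmk[of k] by simp
  have Qs: "sets (Q k) = sets borel" for k using pmk[of k] by simp
  have Qi1: "integrable (Q k) fst" for k using pmk[of k] by simp
  have Qi2: "integrable (Q k) (\<lambda>x. (fst x)\<^sup>2)" for k using pmk[of k] by simp
  have sP: "set_pmf (binomial_pmf n (p i 0)) = {..n}" using q by simp
  have eq: "measure (P i n) A = (\<Sum>k\<le>n. pmf (binomial_pmf n (p i 0)) k * measure (Q k) A)"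
    if A: "A \<in> sets borel" for A
  proof -
    have "measure (P i n) A = measure M ((\<lambda>\<omega>. (X i n \<omega>, Z i n \<omega>)) -` A \<inter> space M)"
      unfolding P_def pair_law_def using A by (intro measure_distr[OF XZm[OF i]]) simp
    also have "(\<lambda>\<omega>. (X i n \<omega>, Z i n \<omega>)) -` A \<inter> space M = {\<omega> \<in> space M. (X i n \<omega>, Z i n \<omega>) \<in> A}" by auto
    also have "measure M \<dots> = rhs_law p M X Z i n A" by (rule rec[OF A])
    also have "\<dots> = (\<Sum>k\<le>n. pmf (binomial_pmf n (p i 0)) k * measure (Q k) A)"
      unfolding rhs_law_def Q_def P_def ..
    finally show ?thesis .
  qed
  have fin: "finite_measure (P i n)" using Pp[OF i] by (rule prob_space.finite_measure)
  note mix1 = mixture_integral[OF sP Qp Qs Ps fin eq hm]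
  note mix2 = mixture_integral[OF sP Qp Qs Ps fin eq hm2]
  have "integral\<^sup>L M (X i n) = integral\<^sup>L (P i n) fst" using PE[OF i] by simp
  also have "\<dots> = (\<Sum>k\<le>n. pmf (binomial_pmf n (p i 0)) k * integral\<^sup>L (Q k) fst)"
    by (rule mix1(2)) (auto intro: Qi1)
  also have "\<dots> = (\<Sum>k\<le>n. pmf (binomial_pmf n (p i 0)) k * (integral\<^sup>L M (X 0 k) + integral\<^sup>L M (X 1 (n - k)) + eta1 p i n))"
    using pmk PE[of 0] PE[of 1] by simp
  finally show "integral\<^sup>L M (X i n) = (\<Sum>k\<le>n. pmf (binomial_pmf n (p i 0)) k * (integral\<^sup>L M (X 0 k) + integral\<^sup>L M (X 1 (n - k)) + eta1 p i n))" .
  have "integral\<^sup>L M (\<lambda>\<omega>. (X i n \<omega>)\<^sup>2) = integral\<^sup>L (P i n) (\<lambda>x. (fst x)\<^sup>2)" using PE2[OF i] by simp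
  also have "\<dots> = (\<Sum>k\<le>n. pmf (binomial_pmf n (p i 0)) k * integral\<^sup>L (Q k) (\<lambda>x. (fst x)\<^sup>2))"
    by (rule mix2(2)) (auto intro: Qi2)
  also have "\<dots> = (\<Sum>k\<le>n. pmf (binomial_pmf n (p i 0)) k *
        (integral\<^sup>L M (\<lambda>\<omega>. (X 0 k \<omega>)\<^sup>2) + integral\<^sup>L M (\<lambda>\<omega>. (X 1 (n - k) \<omega>)\<^sup>2) + (eta1 p i n)\<^sup>2
         + 2 * (integral\<^sup>L M (X 0 k) * integral\<^sup>L M (X 1 (n - k))) + 2 * eta1 p i n * (integral\<^sup>L M (X 0 k) + integral\<^sup>L M (X 1 (n - k)))))"
    using pmk PE[of 0] PE[of 1] PE2[of 0] PE2[of 1] by simp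
  finally show "integral\<^sup>L M (\<lambda>\<omega>. (X i n \<omega>)\<^sup>2) = (\<Sum>k\<le>n. pmf (binomial_pmf n (p i 0)) k *
        (integral\<^sup>L M (\<lambda>\<omega>. (X 0 k \<omega>)\<^sup>2) + integral\<^sup>L M (\<lambda>\<omega>. (X 1 (n - k) \<omega>)\<^sup>2) + (eta1 p i n)\<^sup>2
         + 2 * (integral\<^sup>L M (X 0 k) * integral\<^sup>L M (X 1 (n - k))) + 2 * eta1 p i n * (integral\<^sup>L M (X 0 k) + integral\<^sup>L M (X 1 (n - k)))))" .
qed


theorem lemma6p4:
  fixes p :: "nat \<Rightarrow> nat \<Rightarrow> real"
    and M :: "'a measure"
    and X Z :: "nat \<Rightarrow> nat \<Rightarrow> 'a \<Rightarrow> real"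
  assumes stoch: "\<And>i. i \<in> {0,1} \<Longrightarrow> p i 0 + p i 1 = 1"
    and pos: "\<And>i j. i \<in> {0,1} \<Longrightarrow> j \<in> {0,1} \<Longrightarrow> 0 < p i j \<and> p i j < 1"
    and nonhalf: "\<exists>i\<in>{0,1}. \<exists>j\<in>{0,1}. p i j \<noteq> 1/2"
    and M: "prob_space M"
    and rvX: "\<And>i n. i \<in> {0,1} \<Longrightarrow> X i n \<in> borel_measurable M"
    and rvZ: "\<And>i n. i \<in> {0,1} \<Longrightarrow> Z i n \<in> borel_measurable M"
    and sqX: "\<And>i n. i \<in> {0,1} \<Longrightarrow> integrable M (\<lambda>\<omega>. (X i n \<omega>)\<^sup>2)"
    and sqZ: "\<And>i n. i \<in> {0,1} \<Longrightarrow> integrable M (\<lambda>\<omega>. (Z i n \<omega>)\<^sup>2)"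
    and init: "\<And>i n \<omega>. i \<in> {0,1} \<Longrightarrow> n \<le> 1 \<Longrightarrow> \<omega> \<in> space M \<Longrightarrow> X i n \<omega> = 0 \<and> Z i n \<omega> = 0"
    and rec: "\<And>i n A. i \<in> {0,1} \<Longrightarrow> n \<ge> 2 \<Longrightarrow> A \<in> sets (borel :: (real \<times> real) measure) \<Longrightarrow>
               measure M {\<omega> \<in> space M. (X i n \<omega>, Z i n \<omega>) \<in> A} = rhs_law p M X Z i n A"
  shows "\<forall>i\<in>{0,1}. (\<lambda>n. prob_space.variance M (X i n) - sigma2 p * real n * ln (real n))
                    \<in> O(\<lambda>n. real n)"
proof -
  interpret chain p by unfold_locales (use stoch pos in auto)
  interpret M: prob_space M by (rule M)
  define m where "m j k = integral\<^sup>L M (X j k)" for j k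
  define s where "s j k = integral\<^sup>L M (\<lambda>\<omega>. (X j k \<omega>)\<^sup>2)" for j k
  have intX: "integrable M (X j k)" if j: "j \<in> {0,1}" for j k
    by (rule M.square_integrable_imp_integrable[OF rvX[OF j] sqX[OF j]])
  have mbase: "m j k = 0" if j: "j \<in> {0,1}" and k: "k \<le> 1" for j k
  proof -
    have "integral\<^sup>L M (X j k) = integral\<^sup>L M (\<lambda>\<omega>. 0)"
      by (rule Bochner_Integration.integral_cong) (use init[OF j k] in auto)
    then show ?thesis unfolding m_def by simp
  qed
  have sbase: "s j k = 0" if j: "j \<in> {0,1}" and k: "k \<le> 1" for j k
  proof -
    have "integral\<^sup>L M (\<lambda>\<omega>. (X j k \<omega>)\<^sup>2) = integral\<^sup>L M (\<lambda>\<omega>. 0)"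
      by (rule Bochner_Integration.integral_cong) (use init[OF j k] in auto)
    then show ?thesis unfolding s_def by simp
  qed
  have mrec: "m i n = (\<Sum>k\<le>n. W i n k * (m 0 k + m 1 (n - k) + eta1 p i n))" if i: "i \<in> {0,1}" and n: "2 \<le> n" for i n
  proof -
    have "m i n = (\<Sum>k\<le>n. pmf (binomial_pmf n (p i 0)) k * (m 0 k + m 1 (n - k) + eta1 p i n))"
      unfolding m_def by (rule rec_moments(1)[where p=p and M=M and X=X and Z=Z])
        (use M rvX rvZ sqX q0[OF i] q1[OF i] rec[OF i n] i in auto)
    then show ?thesis using pmf_W[OF i] by simp
  qed
  have mF: "m j n = F j n" if "j \<in> {0,1}" for j n
    by (rule mean_formula[OF _ mrec that]) (use mbase in auto)
  have srec: "s i n = (\<Sum>k\<le>n. W i n k * (s 0 k + s 1 (n - k) + (eta1 p i n)^2 + 2 * (F 0 k * F 1 (n - k)) + 2 * eta1 p i n * (F 0 k + F 1 (n - k))))"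
    if i: "i \<in> {0,1}" and n: "2 \<le> n" for i n
  proof -
    have "s i n = (\<Sum>k\<le>n. pmf (binomial_pmf n (p i 0)) k * (s 0 k + s 1 (n - k) + (eta1 p i n)\<^sup>2
         + 2 * (m 0 k * m 1 (n - k)) + 2 * eta1 p i n * (m 0 k + m 1 (n - k))))"
      unfolding m_def s_def by (rule rec_moments(2)[where p=p and M=M and X=X and Z=Z])
        (use M rvX rvZ sqX q0[OF i] q1[OF i] rec[OF i n] i in auto)
    then show ?thesis using pmf_W[OF i] mF[of 0] mF[of 1] by simp
  qed
  obtain A where A: "\<And>j n. j \<in> {0,1} \<Longrightarrow> \<bar>s j n - (F j n)^2 - sig * real n * ln (real n)\<bar> \<le> A * real n"
    using var_main[OF _ srec] sbase by blast
  show ?thesis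
  proof
    fix i :: nat assume i: "i \<in> {0,1}"
    have v: "prob_space.variance M (X i n) = s i n - (F i n)^2" for n
      using M.variance_eq[OF intX[OF i] sqX[OF i]] mF[OF i] unfolding m_def s_def by simp
    show "(\<lambda>n. prob_space.variance M (X i n) - sigma2 p * real n * ln (real n)) \<in> O(\<lambda>n. real n)"
    proof (rule bigoI[where c=A])
      show "eventually (\<lambda>n. norm (prob_space.variance M (X i n) - sigma2 p * real n * ln (real n)) \<le> A * norm (real n)) at_top"
        using A[OF i] unfolding v sig_def by (intro always_eventually) simp
    qed
  qed
qed

end
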